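(* Let $S$ be a set with $|S|\ge2$ and let $\Gamma$ be a connected simple graph with vertex set $S$. For each edge $e\in E(\Gamma)$ let $eV^{(S)}\le SV$ be the associated subgroup (isomorphic to $2V$). Then $\bigcup_{e\in E(\Gamma)}eV^{(S)}$ generates $SV$.
   Context: Let $\mathfrak C=\{0,1\}^{\omega}$ and let $\mathfrak C^S$ be the space of functions $S\to\mathfrak C$. For $\psi\colon S\to\{0,1\}^*$ with $\psi(s)=\varnothing$ for all but finitely many $s$, the dyadic brick $B(\psi)$ is the set of $\kappa\in\mathfrak C^S$ with $\psi(s)$ a prefix of $\kappa(s)$ for all $s$, and the canonical homeomorphism $\Phi_\psi\colon\mathfrak C^S\to B(\psi)$ is $\Phi_\psi(\kappa)(s)=\psi(s)\cdot\kappa(s)$. The Brin–Thompson group $SV$ is the group of homeomorphisms of $\mathfrak C^S$ for which there exist two partitions $B(\varphi_1),\dots,B(\varphi_n)$ and $B(\psi_1),\dots,B(\psi_n)$ of $\mathfrak C^S$ into dyadic bricks such that $h$ maps each $B(\varphi_i)$ to $B(\psi_i)$ via $\Phi_{\psi_i}\circ\Phi_{\varphi_i}^{-1}$. For $T\subseteq S$, writing $\mathfrak C^S=\mathfrak C^T\times\mathfrak C^{S\setminus T}$, let $TV^{(S)}$ be the subgroup of $SV$ consisting of maps of the form $(a,b)\mapsto(h(a),b)$ with $h\in TV$; it is isomorphic to $TV$, and for a two-element set $e$, $eV^{(S)}$ is isomorphic to Brin's group $2V$. *)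

theory Defs
  imports "HOL-Analysis.Analysis"
begin

text \<open>Points of C^T (T a subset of the index type 's) are represented extensionally
  as functions 's => cantor that are the constant-False sequence outside T.\<close>

type_synonym cantor = "nat \<Rightarrow> bool"

definition Cpow :: "'s set \<Rightarrow> ('s \<Rightarrow> cantor) set" where
  "Cpow T = {\<kappa>. \<forall>s. s \<notin> T \<longrightarrow> \<kappa> s = (\<lambda>_. False)}"

definition cat :: "bool list \<Rightarrow> cantor \<Rightarrow> cantor" where
  "cat w x = (\<lambda>n. if n < length w then w ! n else x (n - length w))"

definition brick_data :: "'s set \<Rightarrow> ('s \<Rightarrow> bool list) \<Rightarrow> bool" where
  "brick_data T \<psi> \<longleftrightarrow> finite {s. \<psi> s \<noteq> []} \<and> (\<forall>s. s \<notin> T \<longrightarrow> \<psi> s = [])"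

definition brick :: "'s set \<Rightarrow> ('s \<Rightarrow> bool list) \<Rightarrow> ('s \<Rightarrow> cantor) set" where
  "brick T \<psi> = {\<kappa> \<in> Cpow T. \<forall>s. \<forall>n < length (\<psi> s). \<kappa> s n = \<psi> s ! n}"

definition Phi :: "('s \<Rightarrow> bool list) \<Rightarrow> ('s \<Rightarrow> cantor) \<Rightarrow> ('s \<Rightarrow> cantor)" where
  "Phi \<psi> \<kappa> = (\<lambda>s. cat (\<psi> s) (\<kappa> s))"

definition Phi_inv :: "('s \<Rightarrow> bool list) \<Rightarrow> ('s \<Rightarrow> cantor) \<Rightarrow> ('s \<Rightarrow> cantor)" where
  "Phi_inv \<psi> \<kappa> = (\<lambda>s n. \<kappa> s (n + length (\<psi> s)))"

definition brick_partition :: "'s set \<Rightarrow> ('s \<Rightarrow> bool list) list \<Rightarrow> bool" where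
  "brick_partition T ps \<longleftrightarrow>
     (\<forall>i < length ps. brick_data T (ps ! i)) \<and>
     (\<forall>i < length ps. \<forall>j < length ps. i \<noteq> j \<longrightarrow> brick T (ps ! i) \<inter> brick T (ps ! j) = {}) \<and>
     (\<Union>i < length ps. brick T (ps ! i)) = Cpow T"

text \<open>The Brin--Thompson group TV acting on C^T (maps are taken to be the identity
  outside the carrier C^T so that they are uniquely determined).
  The topology on C^T is the subspace topology of the product topology.\<close>
definition BT :: "'s set \<Rightarrow> (('s \<Rightarrow> cantor) \<Rightarrow> ('s \<Rightarrow> cantor)) set" where
  "BT T = {h. (\<exists>g. homeomorphism (Cpow T) (Cpow T) h g) \<and>
              (\<forall>\<kappa>. \<kappa> \<notin> Cpow T \<longrightarrow> h \<kappa> = \<kappa>) \<and>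
              (\<exists>phis psis. length phis = length psis \<and>
                 brick_partition T phis \<and> brick_partition T psis \<and>
                 (\<forall>i < length phis. \<forall>\<kappa> \<in> brick T (phis ! i).
                     h \<kappa> = Phi (psis ! i) (Phi_inv (phis ! i) \<kappa>)))}"

text \<open>SV for S the whole index type.\<close>
abbreviation SV :: "(('s \<Rightarrow> cantor) \<Rightarrow> ('s \<Rightarrow> cantor)) set" where
  "SV \<equiv> BT UNIV"

definition restr :: "'s set \<Rightarrow> ('s \<Rightarrow> cantor) \<Rightarrow> ('s \<Rightarrow> cantor)" where
  "restr T \<kappa> = (\<lambda>s. if s \<in> T then \<kappa> s else (\<lambda>_. False))"

definition BT_in :: "'s set \<Rightarrow> (('s \<Rightarrow> cantor) \<Rightarrow> ('s \<Rightarrow> cantor)) set" where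
  "BT_in T = {f. \<exists>h \<in> BT T. \<forall>\<kappa>. f \<kappa> = (\<lambda>s. if s \<in> T then h (restr T \<kappa>) s else \<kappa> s)}"

inductive_set gen_group :: "('a \<Rightarrow> 'a) set \<Rightarrow> ('a \<Rightarrow> 'a) set" for A where
  gen_id: "id \<in> gen_group A"
| gen_base: "a \<in> A \<Longrightarrow> a \<in> gen_group A"
| gen_inv: "a \<in> A \<Longrightarrow> inv a \<in> gen_group A"
| gen_comp: "x \<in> gen_group A \<Longrightarrow> y \<in> gen_group A \<Longrightarrow> x \<circ> y \<in> gen_group A"

definition simple_graph_edges :: "'s set set \<Rightarrow> bool" where
  "simple_graph_edges E \<longleftrightarrow> (\<forall>e \<in> E. card e = 2)"

definition connected_graph :: "'s set set \<Rightarrow> bool" where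
  "connected_graph E \<longleftrightarrow> (\<forall>a b. (a, b) \<in> {(x, y). {x, y} \<in> E}\<^sup>*)"

end

theory Submission
  imports Defs
begin

definition stake :: "nat \<Rightarrow> cantor \<Rightarrow> bool list" where
  "stake n x = map x [0..<n]"
definition sdrop :: "nat \<Rightarrow> cantor \<Rightarrow> cantor" where
  "sdrop n x = (\<lambda>i. x (i + n))"

lemma length_stake[simp]: "length (stake n x) = n" by (simp add: stake_def)
lemma stake_nth[simp]: "i < n \<Longrightarrow> stake n x ! i = x i" by (simp add: stake_def)
lemma stake_0[simp]: "stake 0 x = []" by (simp add: stake_def)
lemma sdrop_0[simp]: "sdrop 0 x = x" by (simp add: sdrop_def)
lemma cat_Nil[simp]: "cat [] z = z" by (simp add: cat_def)
lemma sdrop_sdrop[simp]: "sdrop m (sdrop n x) = sdrop (n + m) x"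
  by (simp add: sdrop_def add.assoc add.commute add.left_commute)
lemma cat_stake_sdrop[simp]: "cat (stake n x) (sdrop n x) = x"
  by (auto simp: cat_def sdrop_def fun_eq_iff)
lemma cat_append: "cat (w @ v) z = cat w (cat v z)"
  by (auto simp: cat_def fun_eq_iff nth_append)
lemma stake_cat: "stake n (cat w z) = take n w @ stake (n - length w) z"
  by (rule nth_equalityI) (auto simp: cat_def nth_append min_def)
lemma stake_cat_le[simp]: "n \<le> length w \<Longrightarrow> stake n (cat w z) = take n w"
  by (simp add: stake_cat)
lemma stake_cat_len[simp]: "stake (length w) (cat w z) = w"
  by (simp add: stake_cat)
lemma sdrop_cat: "sdrop n (cat w z) = cat (drop n w) (sdrop (n - length w) z)"
  apply (auto simp: cat_def sdrop_def fun_eq_iff add.commute)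
  apply (subgoal_tac "x + (n - length w) - (length w - n) = x + n - length w"; simp; linarith)+
  done
lemma sdrop_cat_le[simp]: "n \<le> length w \<Longrightarrow> sdrop n (cat w z) = cat (drop n w) z"
  by (simp add: sdrop_cat)
lemma sdrop_cat_ge: "length w \<le> n \<Longrightarrow> sdrop n (cat w z) = sdrop (n - length w) z"
  by (simp add: sdrop_cat)
lemma sdrop_cat_len[simp]: "sdrop (length w) (cat w z) = z"
  by (simp add: sdrop_cat)
lemma stake_add: "stake (m + n) x = stake m x @ stake n (sdrop m x)"
  by (rule nth_equalityI) (auto simp: nth_append sdrop_def add.commute)
lemma stake_sdrop_take: "m \<le> n \<Longrightarrow> take m (stake n x) = stake m x"
  by (rule nth_equalityI) auto
lemma stake_eq_prefix: "stake n x = stake n y \<Longrightarrow> m \<le> n \<Longrightarrow> stake m x = stake m y"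
  by (metis stake_sdrop_take)
lemma stake_eq_iff: "stake n x = stake n y \<longleftrightarrow> (\<forall>i<n. x i = y i)"
  by (auto simp: stake_def)
lemma cat_eq_stake: "x = cat (stake n x) (sdrop n x)" by simp
lemma cat_inj2: "cat w z = cat w z' \<Longrightarrow> z = z'"
  by (metis sdrop_cat_len)

lemma Phi_inv_alt: "Phi_inv \<psi> \<kappa> = (\<lambda>s. sdrop (length (\<psi> s)) (\<kappa> s))"
  by (simp add: Phi_inv_def sdrop_def)
lemma Phi_alt: "Phi \<psi> \<kappa> s = cat (\<psi> s) (\<kappa> s)" by (simp add: Phi_def)

lemma brick_iff: "\<kappa> \<in> brick T \<psi> \<longleftrightarrow> \<kappa> \<in> Cpow T \<and> (\<forall>s. stake (length (\<psi> s)) (\<kappa> s) = \<psi> s)"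
  unfolding brick_def by (auto simp: list_eq_iff_nth_eq)

lemma brick_cat: "\<kappa> \<in> brick T \<psi> \<Longrightarrow> \<kappa> s = cat (\<psi> s) (sdrop (length (\<psi> s)) (\<kappa> s))"
  by (metis brick_iff cat_stake_sdrop)

lemma Phi_Phi_inv: "\<kappa> \<in> brick T \<psi> \<Longrightarrow> Phi \<psi> (Phi_inv \<psi> \<kappa>) = \<kappa>"
  by (rule ext, simp add: Phi_alt Phi_inv_alt, metis brick_cat)
lemma Phi_inv_Phi[simp]: "Phi_inv \<psi> (Phi \<psi> z) = z"
  by (simp add: Phi_alt Phi_inv_alt fun_eq_iff)

lemma Cpow_UNIV[simp]: "Cpow UNIV = UNIV" by (simp add: Cpow_def)
lemma Cpow_iff: "\<kappa> \<in> Cpow T \<longleftrightarrow> (\<forall>s. s \<notin> T \<longrightarrow> \<kappa> s = (\<lambda>_. False))" by (simp add: Cpow_def)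

lemma Phi_in_brick: "brick_data T \<psi> \<Longrightarrow> z \<in> Cpow T \<Longrightarrow> Phi \<psi> z \<in> brick T \<psi>"
  by (auto simp: brick_iff Phi_alt Cpow_iff brick_data_def)
lemma Phi_inv_Cpow: "\<kappa> \<in> Cpow T \<Longrightarrow> brick_data T \<psi> \<Longrightarrow> Phi_inv \<psi> \<kappa> \<in> Cpow T"
  by (auto simp: Cpow_iff Phi_inv_alt brick_data_def)


definition grid :: "'s set \<Rightarrow> nat \<Rightarrow> ('s \<Rightarrow> cantor) \<Rightarrow> ('s \<Rightarrow> bool list)" where
  "grid U N \<kappa> = (\<lambda>s. if s \<in> U then stake N (\<kappa> s) else [])"

definition canon_on :: "'s set \<Rightarrow> (('s \<Rightarrow> cantor) \<Rightarrow> ('s \<Rightarrow> cantor)) \<Rightarrow> ('s \<Rightarrow> bool list) \<Rightarrow> ('s \<Rightarrow> bool list) \<Rightarrow> bool" where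
  "canon_on T f \<alpha> \<beta> \<longleftrightarrow> (\<forall>\<kappa> \<in> brick T \<alpha>. f \<kappa> = Phi \<beta> (Phi_inv \<alpha> \<kappa>))"

definition grid_canon :: "'s set \<Rightarrow> (('s \<Rightarrow> cantor) \<Rightarrow> ('s \<Rightarrow> cantor)) \<Rightarrow> bool" where
  "grid_canon T f \<longleftrightarrow> (\<exists>U N. finite U \<and> U \<subseteq> T \<and>
     (\<forall>\<kappa> \<in> Cpow T. \<exists>\<beta>. brick_data T \<beta> \<and> canon_on T f (grid U N \<kappa>) \<beta>))"

definition ext_of :: "('s \<Rightarrow> bool list) \<Rightarrow> ('s \<Rightarrow> bool list) \<Rightarrow> bool" where
  "ext_of \<alpha> \<alpha>' \<longleftrightarrow> (\<forall>s. length (\<alpha> s) \<le> length (\<alpha>' s) \<and> take (length (\<alpha> s)) (\<alpha>' s) = \<alpha> s)"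

lemma grid_data: "finite U \<Longrightarrow> U \<subseteq> T \<Longrightarrow> brick_data T (grid U N \<kappa>)"
  unfolding brick_data_def grid_def
  by (auto intro: finite_subset[of _ U])

lemma grid_self: "\<kappa> \<in> Cpow T \<Longrightarrow> \<kappa> \<in> brick T (grid U N \<kappa>)"
  by (auto simp: brick_iff grid_def)

lemma grid_same: "\<kappa>' \<in> brick T (grid U N \<kappa>) \<Longrightarrow> grid U N \<kappa>' = grid U N \<kappa>"
  by (auto simp: brick_iff grid_def fun_eq_iff) (metis length_stake)

lemma brick_sub: "ext_of \<alpha> \<alpha>' \<Longrightarrow> brick T \<alpha>' \<subseteq> brick T \<alpha>"
  by (auto simp: ext_of_def brick_iff) (metis stake_sdrop_take)

lemma canon_refine:
  assumes c: "canon_on T f \<alpha> \<beta>" and e: "ext_of \<alpha> \<alpha>'"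
  shows "canon_on T f \<alpha>' (\<lambda>s. \<beta> s @ drop (length (\<alpha> s)) (\<alpha>' s))"
  unfolding canon_on_def
proof
  fix \<kappa> assume k: "\<kappa> \<in> brick T \<alpha>'"
  hence k1: "\<kappa> \<in> brick T \<alpha>" using brick_sub[OF e] by auto
  show "f \<kappa> = Phi (\<lambda>s. \<beta> s @ drop (length (\<alpha> s)) (\<alpha>' s)) (Phi_inv \<alpha>' \<kappa>)"
  proof (rule ext)
    fix s
    have ks: "\<kappa> s = cat (\<alpha>' s) (sdrop (length (\<alpha>' s)) (\<kappa> s))" using brick_cat[OF k] .
    have le: "length (\<alpha> s) \<le> length (\<alpha>' s)" using e by (simp add: ext_of_def)
    have "sdrop (length (\<alpha> s)) (\<kappa> s) = cat (drop (length (\<alpha> s)) (\<alpha>' s)) (sdrop (length (\<alpha>' s)) (\<kappa> s))"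
      by (subst ks, simp add: le)
    thus "f \<kappa> s = Phi (\<lambda>s. \<beta> s @ drop (length (\<alpha> s)) (\<alpha>' s)) (Phi_inv \<alpha>' \<kappa>) s"
      using c k1 by (simp add: canon_on_def Phi_alt Phi_inv_alt cat_append)
  qed
qed

lemma refine_data:
  assumes "brick_data T \<beta>" "brick_data T \<alpha>'"
  shows "brick_data T (\<lambda>s. \<beta> s @ drop (length (\<alpha> s)) (\<alpha>' s))"
  using assms unfolding brick_data_def
  by (auto intro: finite_subset[of _ "{s. \<beta> s \<noteq> []} \<union> {s. \<alpha>' s \<noteq> []}"])

lemma grid_ext: "N \<le> N' \<Longrightarrow> U \<subseteq> U' \<Longrightarrow> ext_of (grid U N \<kappa>) (grid U' N' \<kappa>)"
  by (auto simp: ext_of_def grid_def stake_sdrop_take)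

lemma canon_Phi_in:
  assumes "canon_on T f \<alpha> \<beta>" "brick_data T \<beta>" "brick_data T \<alpha>" "\<kappa> \<in> brick T \<alpha>"
  shows "f \<kappa> \<in> brick T \<beta>"
proof -
  have "\<kappa> \<in> Cpow T" using assms(4) by (simp add: brick_def)
  hence "Phi_inv \<alpha> \<kappa> \<in> Cpow T" using Phi_inv_Cpow assms(3) by blast
  thus ?thesis using assms Phi_in_brick by (auto simp: canon_on_def)
qed

lemma BT_grid:
  assumes "f \<in> BT T" shows "grid_canon T f"
proof -
  from assms obtain phis psis where len: "length phis = length psis"
    and pp: "brick_partition T phis" and qq: "brick_partition T psis"
    and can: "\<forall>i < length phis. \<forall>\<kappa> \<in> brick T (phis ! i). f \<kappa> = Phi (psis ! i) (Phi_inv (phis ! i) \<kappa>)"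
    unfolding BT_def by blast
  define U where "U = (\<Union>i<length phis. {s. (phis ! i) s \<noteq> []})"
  define N where "N = (\<Sum>i<length phis. \<Sum>s\<in>U. length ((phis ! i) s))"
  have dat: "\<And>i. i < length phis \<Longrightarrow> brick_data T (phis ! i)" using pp by (simp add: brick_partition_def)
  have datq: "\<And>i. i < length psis \<Longrightarrow> brick_data T (psis ! i)" using qq by (simp add: brick_partition_def)
  have fU: "finite U" unfolding U_def using dat by (auto simp: brick_data_def)
  have UT: "U \<subseteq> T" unfolding U_def using dat by (auto simp: brick_data_def)
  have lenN: "length ((phis ! i) s) \<le> N" if "i < length phis" for i s
  proof (cases "s \<in> U")
    case True
    have "length ((phis ! i) s) \<le> (\<Sum>s\<in>U. length ((phis ! i) s))"
      using fU True by (intro member_le_sum) auto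
    also have "\<dots> \<le> N" unfolding N_def using that by (intro member_le_sum) auto
    finally show ?thesis .
  next
    case False thus ?thesis using that by (auto simp: U_def)
  qed
  have "\<exists>\<beta>. brick_data T \<beta> \<and> canon_on T f (grid U N \<kappa>) \<beta>" if k: "\<kappa> \<in> Cpow T" for \<kappa>
  proof -
    have "\<kappa> \<in> (\<Union>i < length phis. brick T (phis ! i))" using pp k by (simp add: brick_partition_def)
    then obtain i where i: "i < length phis" and ki: "\<kappa> \<in> brick T (phis ! i)" by auto
    have e: "ext_of (phis ! i) (grid U N \<kappa>)"
    proof -
      { fix s
        have "length ((phis ! i) s) \<le> length (grid U N \<kappa> s) \<and> take (length ((phis ! i) s)) (grid U N \<kappa> s) = (phis ! i) s"
        proof (cases "s \<in> U")
          case True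
          thus ?thesis using lenN[OF i, of s] ki
            by (auto simp: grid_def brick_iff stake_sdrop_take)
        next
          case False thus ?thesis using i by (auto simp: grid_def U_def)
        qed }
      thus ?thesis by (simp add: ext_of_def)
    qed
    have c: "canon_on T f (phis ! i) (psis ! i)" using can i by (simp add: canon_on_def)
    show ?thesis
      by (rule exI[of _ "\<lambda>s. (psis ! i) s @ drop (length ((phis ! i) s)) (grid U N \<kappa> s)"])
         (use canon_refine[OF c e] refine_data[OF datq grid_data[OF fU UT]] i len in auto)
  qed
  thus ?thesis unfolding grid_canon_def using fU UT by blast
qed


lemma finite_grids:
  assumes "finite U" shows "finite (grid U N ` S)"
proof -
  have "grid U N ` S \<subseteq> (\<lambda>F s. if s \<in> U then F s else []) ` (PiE U (\<lambda>_. {xs. length xs = N}))"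
  proof
    fix g assume "g \<in> grid U N ` S"
    then obtain \<kappa> where g: "g = grid U N \<kappa>" by auto
    have "restrict (\<lambda>s. stake N (\<kappa> s)) U \<in> PiE U (\<lambda>_. {xs. length xs = N})" by auto
    moreover have "g = (\<lambda>s. if s \<in> U then restrict (\<lambda>s. stake N (\<kappa> s)) U s else [])"
      by (auto simp: g grid_def)
    ultimately show "g \<in> (\<lambda>F s. if s \<in> U then F s else []) ` (PiE U (\<lambda>_. {xs. length xs = N}))" by blast
  qed
  moreover have "finite (PiE U (\<lambda>_. {xs::bool list. length xs = N}))"
  proof (intro finite_PiE assms)
    have "{xs::bool list. length xs = N} = {xs. set xs \<subseteq> UNIV \<and> length xs = N}" by auto
    thus "finite {xs::bool list. length xs = N}" using finite_lists_length_eq[of "UNIV::bool set" N] by simp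
  qed
  ultimately show ?thesis by (meson finite_imageI finite_subset)
qed

lemma grid_BT:
  assumes hom: "homeomorphism (Cpow T) (Cpow T) f g"
    and off: "\<forall>\<kappa>. \<kappa> \<notin> Cpow T \<longrightarrow> f \<kappa> = \<kappa>"
    and gc: "grid_canon T f"
  shows "f \<in> BT T"
proof -
  from gc obtain U N where fU: "finite U" and UT: "U \<subseteq> T"
    and ex: "\<forall>\<kappa> \<in> Cpow T. \<exists>\<beta>. brick_data T \<beta> \<and> canon_on T f (grid U N \<kappa>) \<beta>"
    unfolding grid_canon_def by blast
  obtain phis where dist: "distinct phis" and sp: "set phis = grid U N ` Cpow T"
    using finite_distinct_list[OF finite_grids[OF fU]] by blast
  define B where "B = (\<lambda>\<alpha>. SOME \<beta>. brick_data T \<beta> \<and> canon_on T f \<alpha> \<beta>)"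
  define psis where "psis = map B phis"
  have Bp: "brick_data T (B \<alpha>) \<and> canon_on T f \<alpha> (B \<alpha>)" if "\<alpha> \<in> set phis" for \<alpha>
  proof -
    from that sp obtain \<kappa> where "\<kappa> \<in> Cpow T" "\<alpha> = grid U N \<kappa>" by auto
    with ex have "\<exists>\<beta>. brick_data T \<beta> \<and> canon_on T f \<alpha> \<beta>" by auto
    thus ?thesis unfolding B_def by (rule someI_ex)
  qed
  have inj: "inj_on f (Cpow T)" using hom by (metis homeomorphism_apply1 inj_on_inverseI)
  have fim: "f ` Cpow T = Cpow T" using hom by (simp add: homeomorphism_def)
  have dphi: "brick_data T \<alpha>" if "\<alpha> \<in> set phis" for \<alpha> using that sp grid_data[OF fU UT] by auto
  have len: "length phis = length psis" by (simp add: psis_def)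
  have pp: "brick_partition T phis"
    unfolding brick_partition_def
  proof (intro conjI allI impI)
    show "brick_data T (phis ! i)" if "i < length phis" for i using dphi that by auto
    show "brick T (phis ! i) \<inter> brick T (phis ! j) = {}" if "i < length phis" "j < length phis" "i \<noteq> j" for i j
    proof (rule ccontr)
      assume "brick T (phis ! i) \<inter> brick T (phis ! j) \<noteq> {}"
      then obtain \<kappa> where a: "\<kappa> \<in> brick T (phis ! i)" "\<kappa> \<in> brick T (phis ! j)" by auto
      have "phis ! i \<in> grid U N ` Cpow T" "phis ! j \<in> grid U N ` Cpow T" using that sp nth_mem by blast+
      then obtain k1 k2 where "phis ! i = grid U N k1" "phis ! j = grid U N k2" by auto
      with a have "phis ! i = phis ! j" using grid_same by metis
      thus False using dist that by (simp add: nth_eq_iff_index_eq)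
    qed
    show "(\<Union>i<length phis. brick T (phis ! i)) = Cpow T"
    proof
      show "(\<Union>i<length phis. brick T (phis ! i)) \<subseteq> Cpow T" by (auto simp: brick_def)
      show "Cpow T \<subseteq> (\<Union>i<length phis. brick T (phis ! i))"
      proof
        fix \<kappa> assume k: "\<kappa> \<in> Cpow T"
        hence "grid U N \<kappa> \<in> set phis" using sp by auto
        then obtain i where "i < length phis" "phis ! i = grid U N \<kappa>" by (metis in_set_conv_nth)
        thus "\<kappa> \<in> (\<Union>i<length phis. brick T (phis ! i))" using grid_self[OF k, of U N] by (metis UN_iff lessThan_iff)
      qed
    qed
  qed
  have can: "\<forall>i < length phis. \<forall>\<kappa> \<in> brick T (phis ! i). f \<kappa> = Phi (psis ! i) (Phi_inv (phis ! i) \<kappa>)"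
    using Bp by (auto simp: psis_def canon_on_def)
  have bck: "f (Phi (phis ! i) (Phi_inv (psis ! i) \<kappa>)) = \<kappa> \<and> Phi (phis ! i) (Phi_inv (psis ! i) \<kappa>) \<in> brick T (phis ! i)"
    if i: "i < length phis" and k: "\<kappa> \<in> brick T (psis ! i)" for i \<kappa>
  proof -
    have kc: "\<kappa> \<in> Cpow T" using k by (simp add: brick_def)
    have "brick_data T (psis ! i)" using Bp i by (simp add: psis_def)
    hence "Phi_inv (psis ! i) \<kappa> \<in> Cpow T" using Phi_inv_Cpow kc by blast
    hence z: "Phi (phis ! i) (Phi_inv (psis ! i) \<kappa>) \<in> brick T (phis ! i)"
      using Phi_in_brick dphi i nth_mem by blast
    thus ?thesis using can i Phi_Phi_inv[OF k] by simp
  qed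
  have qq: "brick_partition T psis"
    unfolding brick_partition_def
  proof (intro conjI allI impI)
    show "brick_data T (psis ! i)" if "i < length psis" for i using Bp that by (simp add: psis_def)
    show "brick T (psis ! i) \<inter> brick T (psis ! j) = {}" if "i < length psis" "j < length psis" "i \<noteq> j" for i j
    proof (rule ccontr)
      assume "brick T (psis ! i) \<inter> brick T (psis ! j) \<noteq> {}"
      then obtain \<kappa> where a: "\<kappa> \<in> brick T (psis ! i)" "\<kappa> \<in> brick T (psis ! j)" by auto
      define z1 where "z1 = Phi (phis ! i) (Phi_inv (psis ! i) \<kappa>)"
      define z2 where "z2 = Phi (phis ! j) (Phi_inv (psis ! j) \<kappa>)"
      have 1: "f z1 = \<kappa>" "z1 \<in> brick T (phis ! i)" using bck[of i \<kappa>] a that len by (auto simp: z1_def)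
      have 2: "f z2 = \<kappa>" "z2 \<in> brick T (phis ! j)" using bck[of j \<kappa>] a that len by (auto simp: z2_def)
      have "z1 = z2" using inj 1 2 by (auto simp: brick_def inj_on_def)
      thus False using pp 1 2 that len by (auto simp: brick_partition_def)
    qed
    show "(\<Union>i<length psis. brick T (psis ! i)) = Cpow T"
    proof
      show "(\<Union>i<length psis. brick T (psis ! i)) \<subseteq> Cpow T" by (auto simp: brick_def)
      show "Cpow T \<subseteq> (\<Union>i<length psis. brick T (psis ! i))"
      proof
        fix y assume "y \<in> Cpow T"
        then obtain x where x: "x \<in> Cpow T" "y = f x" using fim by auto
        then obtain i where i: "i < length phis" "x \<in> brick T (phis ! i)"
          using pp by (metis (no_types, lifting) UN_iff brick_partition_def lessThan_iff)
        have "f x \<in> brick T (psis ! i)"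
          using canon_Phi_in[of T f "phis ! i" "psis ! i" x] Bp i dphi
          by (auto simp: psis_def)
        thus "y \<in> (\<Union>i<length psis. brick T (psis ! i))" using i x len by auto
      qed
    qed
  qed
  show ?thesis unfolding BT_def using hom off len pp qq can by blast
qed

lemma grid_comp:
  assumes g1: "grid_canon T f1" and g2: "grid_canon T f2" and m: "\<forall>\<kappa>\<in>Cpow T. f1 \<kappa> \<in> Cpow T"
  shows "grid_canon T (f2 \<circ> f1)"
proof -
  from g1 obtain U1 N1 where f1: "finite U1" "U1 \<subseteq> T"
    and e1: "\<forall>\<kappa> \<in> Cpow T. \<exists>\<beta>. brick_data T \<beta> \<and> canon_on T f1 (grid U1 N1 \<kappa>) \<beta>"
    unfolding grid_canon_def by blast
  from g2 obtain U2 N2 where f2: "finite U2" "U2 \<subseteq> T"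
    and e2: "\<forall>\<kappa> \<in> Cpow T. \<exists>\<beta>. brick_data T \<beta> \<and> canon_on T f2 (grid U2 N2 \<kappa>) \<beta>"
    unfolding grid_canon_def by blast
  define U where "U = U1 \<union> U2"
  define N where "N = N1 + N2"
  have fU: "finite U" "U \<subseteq> T" using f1 f2 by (auto simp: U_def)
  have "\<exists>\<beta>. brick_data T \<beta> \<and> canon_on T (f2 \<circ> f1) (grid U N \<kappa>) \<beta>" if k: "\<kappa> \<in> Cpow T" for \<kappa>
  proof -
    obtain \<beta>1 where b1: "brick_data T \<beta>1" "canon_on T f1 (grid U1 N1 \<kappa>) \<beta>1" using e1 k by blast
    have ex1: "ext_of (grid U1 N1 \<kappa>) (grid U N \<kappa>)" by (rule grid_ext) (auto simp: U_def N_def)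
    define \<beta>1' where "\<beta>1' = (\<lambda>s. \<beta>1 s @ drop (length (grid U1 N1 \<kappa> s)) (grid U N \<kappa> s))"
    have c1: "canon_on T f1 (grid U N \<kappa>) \<beta>1'" unfolding \<beta>1'_def by (rule canon_refine[OF b1(2) ex1])
    have d1: "brick_data T \<beta>1'" unfolding \<beta>1'_def by (rule refine_data[OF b1(1) grid_data[OF fU]])
    have kb: "\<kappa> \<in> brick T (grid U N \<kappa>)" by (rule grid_self[OF k])
    have k1: "f1 \<kappa> \<in> brick T \<beta>1'" by (rule canon_Phi_in[OF c1 d1 grid_data[OF fU] kb])
    have k1c: "f1 \<kappa> \<in> Cpow T" using m k by auto
    obtain \<beta>2 where b2: "brick_data T \<beta>2" "canon_on T f2 (grid U2 N2 (f1 \<kappa>)) \<beta>2" using e2 k1c by blast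
    have ex2: "ext_of (grid U2 N2 (f1 \<kappa>)) \<beta>1'"
      unfolding ext_of_def
    proof
      fix s
      show "length (grid U2 N2 (f1 \<kappa>) s) \<le> length (\<beta>1' s) \<and> take (length (grid U2 N2 (f1 \<kappa>) s)) (\<beta>1' s) = grid U2 N2 (f1 \<kappa>) s"
      proof (cases "s \<in> U2")
        case True
        have "length (grid U1 N1 \<kappa> s) \<le> N1" by (simp add: grid_def)
        moreover have "length (grid U N \<kappa> s) = N" using True by (simp add: grid_def U_def)
        ultimately have L: "N2 \<le> length (\<beta>1' s)" by (simp add: \<beta>1'_def N_def)
        have "stake (length (\<beta>1' s)) (f1 \<kappa> s) = \<beta>1' s" using k1 by (simp add: brick_iff)
        hence "take N2 (\<beta>1' s) = stake N2 (f1 \<kappa> s)" using L by (metis stake_sdrop_take)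
        thus ?thesis using True L by (simp add: grid_def)
      next
        case False thus ?thesis by (simp add: grid_def)
      qed
    qed
    define \<beta>2' where "\<beta>2' = (\<lambda>s. \<beta>2 s @ drop (length (grid U2 N2 (f1 \<kappa>) s)) (\<beta>1' s))"
    have c2: "canon_on T f2 \<beta>1' \<beta>2'" unfolding \<beta>2'_def by (rule canon_refine[OF b2(2) ex2])
    have d2: "brick_data T \<beta>2'" unfolding \<beta>2'_def by (rule refine_data[OF b2(1) d1])
    have "canon_on T (f2 \<circ> f1) (grid U N \<kappa>) \<beta>2'"
      unfolding canon_on_def
    proof
      fix x assume x: "x \<in> brick T (grid U N \<kappa>)"
      have "f1 x \<in> brick T \<beta>1'" by (rule canon_Phi_in[OF c1 d1 grid_data[OF fU] x])
      hence "f2 (f1 x) = Phi \<beta>2' (Phi_inv \<beta>1' (f1 x))" using c2 by (simp add: canon_on_def)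
      also have "\<dots> = Phi \<beta>2' (Phi_inv (grid U N \<kappa>) x)" using c1 x by (simp add: canon_on_def)
      finally show "(f2 \<circ> f1) x = Phi \<beta>2' (Phi_inv (grid U N \<kappa>) x)" by simp
    qed
    thus ?thesis using d2 by blast
  qed
  thus ?thesis unfolding grid_canon_def using fU by blast
qed


lemma hb: "Hausdorff_space (euclidean :: bool topology)"
  unfolding Hausdorff_space_def
  apply (intro allI impI)
  apply (rule_tac x="{x}" in exI) apply (rule_tac x="{y}" in exI)
  by (auto simp: disjnt_def open_discrete)
lemma cb: "compact_space (euclidean :: bool topology)"
  by (simp add: compact_space_def finite_imp_compact)
lemma hc: "Hausdorff_space (euclidean :: (nat \<Rightarrow> bool) topology)"
  by (metis euclidean_product_topology Hausdorff_space_product_topology hb)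
lemma cc: "compact_space (euclidean :: (nat \<Rightarrow> bool) topology)"
  by (metis euclidean_product_topology compact_space_product_topology cb)
lemma hs: "Hausdorff_space (euclidean :: ('s \<Rightarrow> nat \<Rightarrow> bool) topology)"
  by (metis euclidean_product_topology Hausdorff_space_product_topology hc)
lemma cs: "compact_space (euclidean :: ('s \<Rightarrow> nat \<Rightarrow> bool) topology)"
  by (metis euclidean_product_topology compact_space_product_topology cc)

lemma bij_cont_homeo:
  fixes f :: "('s \<Rightarrow> cantor) \<Rightarrow> ('s \<Rightarrow> cantor)"
  assumes c: "continuous_on UNIV f" and b: "bij f"
  shows "\<exists>g. homeomorphism UNIV UNIV f g"
proof -
  have cm: "continuous_map euclidean euclidean f" using c
    by (metis continuous_map_iff_continuous subtopology_UNIV)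
  have cl: "closed_map euclidean euclidean f"
    by (rule continuous_imp_closed_map_gen[OF cs Hausdorff_imp_kc_space[OF hs] cm])
  obtain g where "homeomorphism UNIV UNIV f g"
  proof (rule homeomorphism_injective_closed_map[OF c])
    show "f ` UNIV = UNIV" using b by (simp add: bij_def)
    show "inj_on f UNIV" using b by (simp add: bij_def)
    show "closedin (top_of_set UNIV) (f ` U)" if "closedin (top_of_set UNIV) U" for U
      using cl that by (simp add: closed_map_def)
  qed
  thus ?thesis by blast
qed

lemma cont_coord: "continuous_on UNIV (\<lambda>\<kappa>::'s \<Rightarrow> cantor. \<kappa> s n)"
  by (rule continuous_on_compose2[OF continuous_on_product_coordinates continuous_on_product_coordinates]) auto

lemma open_grid_brick:
  fixes x :: "'s \<Rightarrow> cantor"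
  assumes "finite U" shows "open (brick UNIV (grid U N x))"
proof -
  have "brick UNIV (grid U N x) = (\<Inter>s\<in>U. \<Inter>n\<in>{..<N}. (\<lambda>\<kappa>. \<kappa> s n) -` {x s n})"
    by (auto simp: brick_def grid_def)
  moreover have "open ((\<lambda>\<kappa>::'s \<Rightarrow> cantor. \<kappa> s n) -` {x s n})" for s n
    using cont_coord[of s n] by (metis continuous_on_open_vimage inf_top.right_neutral open_UNIV open_discrete)
  ultimately show ?thesis using assms by (auto intro!: open_INT)
qed

lemma cont_Phi: "continuous_on UNIV (\<lambda>\<kappa>. Phi \<beta> (Phi_inv \<alpha> \<kappa>))"
proof (intro continuous_on_coordinatewise_then_product)
  fix s n
  show "continuous_on UNIV (\<lambda>\<kappa>. Phi \<beta> (Phi_inv \<alpha> \<kappa>) s n)"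
  proof (cases "n < length (\<beta> s)")
    case True
    have eq: "(\<lambda>\<kappa>. Phi \<beta> (Phi_inv \<alpha> \<kappa>) s n) = (\<lambda>\<kappa>. \<beta> s ! n)"
      using True by (simp add: Phi_alt cat_def fun_eq_iff)
    show ?thesis unfolding eq by simp
  next
    case False
    have eq: "(\<lambda>\<kappa>. Phi \<beta> (Phi_inv \<alpha> \<kappa>) s n) = (\<lambda>\<kappa>. \<kappa> s (n - length (\<beta> s) + length (\<alpha> s)))"
      using False by (simp add: Phi_alt cat_def Phi_inv_alt sdrop_def fun_eq_iff)
    show ?thesis unfolding eq by (rule cont_coord)
  qed
qed

lemma grid_cont:
  fixes f :: "('s \<Rightarrow> cantor) \<Rightarrow> ('s \<Rightarrow> cantor)"
  assumes "grid_canon UNIV f" shows "continuous_on UNIV f"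
proof -
  from assms obtain U N where fU: "finite U"
    and ex: "\<forall>\<kappa>. \<exists>\<beta>. brick_data UNIV \<beta> \<and> canon_on UNIV f (grid U N \<kappa>) \<beta>"
    unfolding grid_canon_def Cpow_UNIV by blast
  define B where "B = (\<lambda>x. SOME \<beta>. brick_data UNIV \<beta> \<and> canon_on UNIV f (grid U N x) \<beta>)"
  have Bc: "canon_on UNIV f (grid U N x) (B x)" for x
    using someI_ex[OF ex[rule_format, of x]] by (simp add: B_def)
  define F where "F = (\<lambda>x \<kappa>. Phi (B x) (Phi_inv (grid U N x) \<kappa>))"
  have "open (f -` S)" if S: "open S" for S
  proof -
    have eqS: "f -` S = (\<Union>x\<in>f -` S. brick UNIV (grid U N x) \<inter> F x -` S)"
    proof
      show "f -` S \<subseteq> (\<Union>x\<in>f -` S. brick UNIV (grid U N x) \<inter> F x -` S)"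
      proof
        fix x assume x: "x \<in> f -` S"
        have xb: "x \<in> brick UNIV (grid U N x)" by (rule grid_self) simp
        hence "F x x = f x" using Bc[of x] by (simp add: canon_on_def F_def)
        thus "x \<in> (\<Union>x\<in>f -` S. brick UNIV (grid U N x) \<inter> F x -` S)" using x xb by blast
      qed
      show "(\<Union>x\<in>f -` S. brick UNIV (grid U N x) \<inter> F x -` S) \<subseteq> f -` S"
        using Bc by (auto simp: canon_on_def F_def)
    qed
    have op: "open (brick UNIV (grid U N x) \<inter> F x -` S)" for x
    proof -
      have "continuous_on UNIV (F x)" unfolding F_def by (rule cont_Phi)
      hence "open (F x -` S \<inter> UNIV)" using S by (simp only: continuous_on_open_vimage[OF open_UNIV])
      thus ?thesis using open_grid_brick[OF fU, of N x] by (simp add: open_Int)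
    qed
    have "open (\<Union>x\<in>f -` S. brick UNIV (grid U N x) \<inter> F x -` S)" using op by (intro open_UN) auto
    thus ?thesis using eqS by simp
  qed
  thus ?thesis by (simp add: continuous_on_open_vimage)
qed

lemma grid_SV:
  fixes f :: "('s \<Rightarrow> cantor) \<Rightarrow> ('s \<Rightarrow> cantor)"
  assumes "bij f" "grid_canon UNIV f" shows "f \<in> SV"
proof -
  obtain g where "homeomorphism UNIV UNIV f g" using bij_cont_homeo grid_cont assms by blast
  thus ?thesis using grid_BT[of UNIV f g] assms by simp
qed

lemma SV_bij: assumes "f \<in> BT UNIV" shows "bij f"
proof -
  from assms obtain g where "homeomorphism UNIV UNIV f g" unfolding BT_def Cpow_UNIV by blast
  hence a: "\<And>x. g (f x) = x" and b: "\<And>y. f (g y) = y" by (auto simp: homeomorphism_def)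
  have "inj f" using a by (metis injI)
  moreover have "surj f" unfolding surj_def using b by metis
  ultimately show ?thesis by (simp add: bij_def)
qed

lemma SV_comp: assumes "f1 \<in> SV" "f2 \<in> SV" shows "f2 \<circ> f1 \<in> SV"
proof (rule grid_SV)
  show "bij (f2 \<circ> f1)" by (rule bij_comp[OF SV_bij[OF assms(1)] SV_bij[OF assms(2)]])
  show "grid_canon UNIV (f2 \<circ> f1)" by (rule grid_comp[OF BT_grid[OF assms(1)] BT_grid[OF assms(2)]]) simp
qed

lemma SV_inv:
  assumes f: "f \<in> SV" shows "inv f \<in> SV"
proof -
  have b: "bij f" using SV_bij f .
  from f obtain g phis psis where hom: "homeomorphism UNIV UNIV f g" and len: "length phis = length psis"
    and pp: "brick_partition UNIV phis" and qq: "brick_partition UNIV psis"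
    and can: "\<forall>i < length phis. \<forall>\<kappa> \<in> brick UNIV (phis ! i). f \<kappa> = Phi (psis ! i) (Phi_inv (phis ! i) \<kappa>)"
    unfolding BT_def Cpow_UNIV by blast
  have gi: "g = inv f"
  proof
    fix y have "f (g y) = y" using hom by (simp add: homeomorphism_def)
    thus "g y = inv f y" using b by (metis bij_is_inj inv_f_f)
  qed
  have can2: "\<forall>i < length psis. \<forall>\<kappa> \<in> brick UNIV (psis ! i). inv f \<kappa> = Phi (phis ! i) (Phi_inv (psis ! i) \<kappa>)"
  proof (intro allI impI ballI)
    fix i \<kappa> assume i: "i < length psis" and k: "\<kappa> \<in> brick UNIV (psis ! i)"
    have z: "Phi (phis ! i) (Phi_inv (psis ! i) \<kappa>) \<in> brick UNIV (phis ! i)"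
      using pp i len by (intro Phi_in_brick) (auto simp: brick_partition_def)
    have "f (Phi (phis ! i) (Phi_inv (psis ! i) \<kappa>)) = \<kappa>"
      using can i len z Phi_Phi_inv[OF k] by simp
    thus "inv f \<kappa> = Phi (phis ! i) (Phi_inv (psis ! i) \<kappa>)" using b by (metis bij_inv_eq_iff)
  qed
  have "homeomorphism UNIV UNIV (inv f) f" using hom unfolding gi[symmetric] by (auto simp: homeomorphism_def)
  hence "\<exists>g. homeomorphism UNIV UNIV (inv f) g" by blast
  moreover have "\<exists>phis psis. length phis = length psis \<and>
                 brick_partition UNIV phis \<and> brick_partition UNIV psis \<and>
                 (\<forall>i < length phis. \<forall>\<kappa> \<in> brick UNIV (phis ! i).
                     inv f \<kappa> = Phi (psis ! i) (Phi_inv (phis ! i) \<kappa>))"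
    apply (rule exI[of _ psis]) apply (rule exI[of _ phis]) using len pp qq can2 by simp
  ultimately show ?thesis unfolding BT_def by simp
qed


lemma restr_Cpow: "restr e \<kappa> \<in> Cpow e" by (simp add: restr_def Cpow_def)

lemma BT_in_SV:
  fixes f :: "('s \<Rightarrow> cantor) \<Rightarrow> ('s \<Rightarrow> cantor)"
  assumes f: "f \<in> BT_in e" shows "f \<in> SV"
proof -
  from f obtain h where h: "h \<in> BT e" and fd: "\<And>\<kappa>. f \<kappa> = (\<lambda>s. if s \<in> e then h (restr e \<kappa>) s else \<kappa> s)"
    unfolding BT_in_def by auto
  from h obtain g where hom: "homeomorphism (Cpow e) (Cpow e) h g" unfolding BT_def by auto
  have hC: "h \<kappa> \<in> Cpow e" if "\<kappa> \<in> Cpow e" for \<kappa> using hom that by (auto simp: homeomorphism_def)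
  have gC: "g \<kappa> \<in> Cpow e" "h (g \<kappa>) = \<kappa>" if "\<kappa> \<in> Cpow e" for \<kappa> using hom that by (auto simp: homeomorphism_def)
  have hg: "g (h \<kappa>) = \<kappa>" if "\<kappa> \<in> Cpow e" for \<kappa> using hom that by (auto simp: homeomorphism_def)
  have restr_id: "restr e \<kappa> = \<kappa>" if "\<kappa> \<in> Cpow e" for \<kappa> using that by (auto simp: restr_def Cpow_def fun_eq_iff)
  have inj: "inj f"
  proof
    fix x y assume "f x = f y"
    hence a: "\<forall>s. (if s \<in> e then h (restr e x) s else x s) = (if s \<in> e then h (restr e y) s else y s)" by (simp add: fd fun_eq_iff)
    have "h (restr e x) = h (restr e y)"
    proof
      fix s show "h (restr e x) s = h (restr e y) s"
        using a[rule_format, of s] hC[OF restr_Cpow, of x] hC[OF restr_Cpow, of y]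
        by (cases "s \<in> e") (auto simp: Cpow_def)
    qed
    hence r: "restr e x = restr e y" by (metis hg restr_Cpow)
    show "x = y"
    proof
      fix s show "x s = y s"
        using fun_cong[OF r, of s] a[rule_format, of s] by (cases "s \<in> e") (auto simp: restr_def)
    qed
  qed
  have surj: "surj f"
  proof -
    { fix y
      define z where "z = g (restr e y)"
      have zc: "z \<in> Cpow e" using gC restr_Cpow z_def by blast
      define x where "x = (\<lambda>s. if s \<in> e then z s else y s)"
      have rx: "restr e x = z" using zc by (auto simp: x_def restr_def Cpow_def fun_eq_iff)
      have hz: "h z = restr e y" using gC(2)[OF restr_Cpow, of y] by (simp add: z_def)
      have "f x = y"
      proof
        fix s show "f x s = y s"
        proof (cases "s \<in> e")
          case True thus ?thesis by (simp add: fd rx hz, simp add: restr_def)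
        next
          case False thus ?thesis by (simp add: fd x_def)
        qed
      qed
      hence "y \<in> range f" by auto }
    thus ?thesis by auto
  qed
  have gc: "grid_canon UNIV f"
  proof -
    from BT_grid[OF h] obtain U N where fU: "finite U" and Ue: "U \<subseteq> e"
      and ex: "\<forall>\<kappa> \<in> Cpow e. \<exists>\<beta>. brick_data e \<beta> \<and> canon_on e h (grid U N \<kappa>) \<beta>"
      unfolding grid_canon_def by blast
    have "\<exists>\<beta>. brick_data UNIV \<beta> \<and> canon_on UNIV f (grid U N \<kappa>) \<beta>" for \<kappa>
    proof -
      have gr: "grid U N (restr e \<kappa>) = grid U N \<kappa>" using Ue by (auto simp: grid_def restr_def fun_eq_iff)
      obtain \<beta> where b: "brick_data e \<beta>" "canon_on e h (grid U N \<kappa>) \<beta>"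
        using ex restr_Cpow gr by metis
      have "canon_on UNIV f (grid U N \<kappa>) \<beta>"
        unfolding canon_on_def
      proof
        fix x assume x: "x \<in> brick UNIV (grid U N \<kappa>)"
        have "restr e x \<in> brick e (grid U N \<kappa>)"
          unfolding brick_iff
        proof (intro conjI allI)
          show "restr e x \<in> Cpow e" by (rule restr_Cpow)
          fix s show "stake (length (grid U N \<kappa> s)) (restr e x s) = grid U N \<kappa> s"
          proof -
            have "stake (length (grid U N \<kappa> s)) (x s) = grid U N \<kappa> s" using x by (simp add: brick_iff)
            thus ?thesis using Ue by (auto simp: grid_def restr_def)
          qed
        qed
        hence hx: "h (restr e x) = Phi \<beta> (Phi_inv (grid U N \<kappa>) (restr e x))" using b(2) by (simp add: canon_on_def)
        show "f x = Phi \<beta> (Phi_inv (grid U N \<kappa>) x)"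
        proof
          fix s show "f x s = Phi \<beta> (Phi_inv (grid U N \<kappa>) x) s"
          proof (cases "s \<in> e")
            case True thus ?thesis by (simp add: fd hx, simp add: Phi_alt Phi_inv_alt restr_def)
          next
            case False
            hence "\<beta> s = []" "s \<notin> U" using b(1) Ue by (auto simp: brick_data_def)
            thus ?thesis using False by (simp add: fd Phi_alt Phi_inv_alt grid_def)
          qed
        qed
      qed
      moreover have "brick_data UNIV \<beta>" using b(1) by (simp add: brick_data_def)
      ultimately show ?thesis by blast
    qed
    thus ?thesis unfolding grid_canon_def using fU by blast
  qed
  show ?thesis by (rule grid_SV) (use inj surj gc in \<open>auto simp: bij_def\<close>)
qed


lemma SV_local_BT_in:
  fixes f :: "('s \<Rightarrow> cantor) \<Rightarrow> ('s \<Rightarrow> cantor)"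
  assumes f: "f \<in> SV"
    and out: "\<And>\<kappa> s. s \<notin> e \<Longrightarrow> f \<kappa> s = \<kappa> s"
    and loc: "\<And>\<kappa> \<kappa>' s. (\<forall>t\<in>e. \<kappa> t = \<kappa>' t) \<Longrightarrow> s \<in> e \<Longrightarrow> f \<kappa> s = f \<kappa>' s"
  shows "f \<in> BT_in e"
proof -
  define h0 where "h0 = (\<lambda>\<kappa>. if \<kappa> \<in> Cpow e then f \<kappa> else \<kappa>)"
  from f obtain g where hom: "homeomorphism UNIV UNIV f g" unfolding BT_def Cpow_UNIV by blast
  have fC: "f \<kappa> \<in> Cpow e" if "\<kappa> \<in> Cpow e" for \<kappa> using that out by (auto simp: Cpow_def)
  have gC: "g \<kappa> \<in> Cpow e" if "\<kappa> \<in> Cpow e" for \<kappa>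
  proof -
    have fg: "f (g \<kappa>) = \<kappa>" using hom by (simp add: homeomorphism_def)
    have "g \<kappa> s = \<kappa> s" if "s \<notin> e" for s using out[of s "g \<kappa>"] that fg by simp
    thus ?thesis using that by (auto simp: Cpow_def)
  qed
  have hom0: "homeomorphism (Cpow e) (Cpow e) h0 g"
    unfolding homeomorphism_def
  proof (intro conjI)
    show "\<forall>x\<in>Cpow e. g (h0 x) = x" using hom by (auto simp: h0_def homeomorphism_def)
    show "\<forall>y\<in>Cpow e. h0 (g y) = y" using hom gC by (auto simp: h0_def homeomorphism_def)
    show "h0 ` Cpow e = Cpow e"
    proof
      show "h0 ` Cpow e \<subseteq> Cpow e" using fC by (auto simp: h0_def)
      show "Cpow e \<subseteq> h0 ` Cpow e"
      proof
        fix y assume "y \<in> Cpow e"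
        hence "g y \<in> Cpow e" "h0 (g y) = y" using hom gC by (auto simp: h0_def homeomorphism_def)
        thus "y \<in> h0 ` Cpow e" by (metis image_eqI)
      qed
    qed
    show "g ` Cpow e = Cpow e"
    proof
      show "g ` Cpow e \<subseteq> Cpow e" using gC by auto
      show "Cpow e \<subseteq> g ` Cpow e"
      proof
        fix y assume "y \<in> Cpow e"
        hence "h0 y \<in> Cpow e" "g (h0 y) = y" using hom fC by (auto simp: h0_def homeomorphism_def)
        thus "y \<in> g ` Cpow e" by (metis image_eqI)
      qed
    qed
    have "continuous_on (Cpow e) f" using hom by (auto simp: homeomorphism_def intro: continuous_on_subset)
    thus "continuous_on (Cpow e) h0" by (rule continuous_on_eq) (simp add: h0_def)
    show "continuous_on (Cpow e) g" using hom by (auto simp: homeomorphism_def intro: continuous_on_subset)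
  qed
  have gc: "grid_canon e h0"
  proof -
    from BT_grid[OF f] obtain U N where fU: "finite U"
      and ex: "\<forall>\<kappa>. \<exists>\<beta>. brick_data UNIV \<beta> \<and> canon_on UNIV f (grid U N \<kappa>) \<beta>"
      unfolding grid_canon_def Cpow_UNIV by blast
    have "\<exists>\<beta>. brick_data e \<beta> \<and> canon_on e h0 (grid (U \<inter> e) N \<kappa>) \<beta>" if k: "\<kappa> \<in> Cpow e" for \<kappa>
    proof -
      obtain \<beta> where b: "brick_data UNIV \<beta>" "canon_on UNIV f (grid U N \<kappa>) \<beta>" using ex by blast
      define \<beta>' where "\<beta>' = (\<lambda>s. if s \<in> e then \<beta> s else [])"
      have "brick_data e \<beta>'" using b(1) unfolding brick_data_def \<beta>'_def
        by (auto intro: finite_subset[of _ "{s. \<beta> s \<noteq> []}"])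
      moreover have "canon_on e h0 (grid (U \<inter> e) N \<kappa>) \<beta>'"
        unfolding canon_on_def
      proof
        fix x assume x: "x \<in> brick e (grid (U \<inter> e) N \<kappa>)"
        have xc: "x \<in> Cpow e" using x by (simp add: brick_def)
        have "x \<in> brick UNIV (grid U N \<kappa>)"
          unfolding brick_iff
        proof (intro conjI allI)
          show "x \<in> Cpow UNIV" by simp
          fix s
          have st: "stake (length (grid (U \<inter> e) N \<kappa> s)) (x s) = grid (U \<inter> e) N \<kappa> s" using x by (simp add: brick_iff)
          show "stake (length (grid U N \<kappa> s)) (x s) = grid U N \<kappa> s"
          proof (cases "s \<in> e")
            case True thus ?thesis using st by (simp add: grid_def)
          next
            case False
            hence "x s = \<kappa> s" using xc k by (simp add: Cpow_def)
            thus ?thesis by (simp add: grid_def)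
          qed
        qed
        hence fx: "f x = Phi \<beta> (Phi_inv (grid U N \<kappa>) x)" using b(2) by (simp add: canon_on_def)
        show "h0 x = Phi \<beta>' (Phi_inv (grid (U \<inter> e) N \<kappa>) x)"
        proof
          fix s show "h0 x s = Phi \<beta>' (Phi_inv (grid (U \<inter> e) N \<kappa>) x) s"
          proof (cases "s \<in> e")
            case True thus ?thesis using xc by (simp add: h0_def fx Phi_alt Phi_inv_alt grid_def \<beta>'_def)
          next
            case False thus ?thesis using xc out by (simp add: h0_def Phi_alt Phi_inv_alt grid_def \<beta>'_def)
          qed
        qed
      qed
      ultimately show ?thesis by blast
    qed
    hence "finite (U \<inter> e) \<and> U \<inter> e \<subseteq> e \<and> (\<forall>\<kappa> \<in> Cpow e. \<exists>\<beta>. brick_data e \<beta> \<and> canon_on e h0 (grid (U \<inter> e) N \<kappa>) \<beta>)"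
      using fU by blast
    thus ?thesis unfolding grid_canon_def by blast
  qed
  have off: "\<forall>\<kappa>. \<kappa> \<notin> Cpow e \<longrightarrow> h0 \<kappa> = \<kappa>" by (simp add: h0_def)
  have hB: "h0 \<in> BT e" by (rule grid_BT[OF hom0 off gc])
  have "f \<kappa> = (\<lambda>s. if s \<in> e then h0 (restr e \<kappa>) s else \<kappa> s)" for \<kappa>
  proof
    fix s show "f \<kappa> s = (if s \<in> e then h0 (restr e \<kappa>) s else \<kappa> s)"
    proof (cases "s \<in> e")
      case True
      have "f (restr e \<kappa>) s = f \<kappa> s" by (rule loc) (auto simp: restr_def True)
      thus ?thesis using True restr_Cpow[of e \<kappa>] by (simp add: h0_def)
    next
      case False thus ?thesis using out by simp
    qed
  qed
  thus ?thesis unfolding BT_in_def using hB by blast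
qed


definition stop :: "(cantor \<Rightarrow> nat) \<Rightarrow> bool" where
  "stop \<sigma> \<longleftrightarrow> (\<forall>x y. stake (\<sigma> x) y = stake (\<sigma> x) x \<longrightarrow> \<sigma> y = \<sigma> x)"

definition good :: "(cantor \<Rightarrow> nat) \<Rightarrow> (bool list \<Rightarrow> cantor \<Rightarrow> nat) \<Rightarrow> bool" where
  "good \<sigma> \<rho> \<longleftrightarrow> stop \<sigma> \<and> (\<forall>w. stop (\<rho> w)) \<and> (\<exists>B. \<forall>z y. \<sigma> z + \<rho> (stake (\<sigma> z) z) y \<le> B)"

definition cp :: "'s \<Rightarrow> 's \<Rightarrow> (cantor \<Rightarrow> nat) \<Rightarrow> (bool list \<Rightarrow> cantor \<Rightarrow> nat) \<Rightarrow> ('s \<Rightarrow> cantor) \<Rightarrow> ('s \<Rightarrow> cantor)" where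
  "cp a b \<sigma> \<rho> \<kappa> = (let x = \<kappa> a; k = \<sigma> x; p = stake k x; y = \<kappa> b; l = \<rho> p y in
     \<kappa>(a := cat (p @ stake l y) (sdrop k x), b := sdrop l y))"

definition cpi :: "'s \<Rightarrow> 's \<Rightarrow> (cantor \<Rightarrow> nat) \<Rightarrow> (bool list \<Rightarrow> cantor \<Rightarrow> nat) \<Rightarrow> ('s \<Rightarrow> cantor) \<Rightarrow> ('s \<Rightarrow> cantor)" where
  "cpi a b \<sigma> \<rho> \<kappa> = (let z = \<kappa> a; k = \<sigma> z; p = stake k z; z' = sdrop k z; l = \<rho> p z' in
     \<kappa>(a := cat p (sdrop l z'), b := cat (stake l z') (\<kappa> b)))"

lemma stopD: "stop \<sigma> \<Longrightarrow> stake (\<sigma> x) y = stake (\<sigma> x) x \<Longrightarrow> \<sigma> y = \<sigma> x"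
  unfolding stop_def by blast

lemma stop_cat: "stop \<sigma> \<Longrightarrow> \<sigma> (cat (stake (\<sigma> x) x) w) = \<sigma> x"
  using stopD[of \<sigma> x "cat (stake (\<sigma> x) x) w"] by (simp add: stake_cat)

lemma stop_cat': "stop \<sigma> \<Longrightarrow> \<sigma> x = length p \<Longrightarrow> stake (length p) x = p \<Longrightarrow> \<sigma> (cat p w) = length p"
  using stopD[of \<sigma> x "cat p w"] by simp

lemma sdrop_split: assumes "k \<le> B" shows "sdrop k x = cat (drop k (stake B x)) (sdrop B x)"
proof -
  have "sdrop k (cat (stake B x) (sdrop B x)) = cat (drop k (stake B x)) (sdrop B x)"
    using assms by (simp only: sdrop_cat_le length_stake)
  thus ?thesis by simp
qed

lemma cp_inv1:
  assumes "a \<noteq> b" "good \<sigma> \<rho>" shows "cpi a b \<sigma> \<rho> (cp a b \<sigma> \<rho> \<kappa>) = \<kappa>"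
proof -
  have s: "stop \<sigma>" and r: "\<And>w. stop (\<rho> w)" using assms(2) by (auto simp: good_def)
  define x where "x = \<kappa> a"
  define k where "k = \<sigma> x"
  define p where "p = stake k x"
  define y where "y = \<kappa> b"
  define l where "l = \<rho> p y"
  define q where "q = stake l y"
  have c: "cp a b \<sigma> \<rho> \<kappa> = \<kappa>(a := cat (p @ q) (sdrop k x), b := sdrop l y)"
    by (simp add: cp_def Let_def x_def k_def p_def y_def l_def q_def)
  have lp: "length p = k" by (simp add: p_def)
  have sk: "\<sigma> (cat (p @ q) (sdrop k x)) = k"
    unfolding cat_append k_def p_def using stop_cat[OF s] by simp
  have sl: "\<rho> p (cat q (sdrop k x)) = l"
    unfolding l_def q_def using stop_cat[OF r] by simp
  define K where "K = cp a b \<sigma> \<rho> \<kappa>"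
  have Ka: "K a = cat (p @ q) (sdrop k x)" and Kb: "K b = sdrop l y" using assms(1) by (simp_all add: K_def c)
  have lq: "length q = l" by (simp add: q_def)
  have z1: "stake k (K a) = p" using lp Ka by simp
  have z2: "sdrop k (K a) = cat q (sdrop k x)" using lp Ka by simp
  have sK: "\<sigma> (K a) = k" using Ka sk by simp
  have z3: "\<rho> p (sdrop k (K a)) = l" using z2 sl by simp
  have ea: "cat p (sdrop l (cat q (sdrop k x))) = \<kappa> a"
    using lq by (simp add: p_def x_def)
  have eb: "cat (stake l (cat q (sdrop k x))) (K b) = \<kappa> b"
    using lq Kb by (simp add: q_def y_def)
  have "cpi a b \<sigma> \<rho> K = K(a := cat p (sdrop l (cat q (sdrop k x))), b := cat (stake l (cat q (sdrop k x))) (K b))"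
    by (simp add: cpi_def Let_def sK z1 z2 z3 sl del: sdrop_sdrop)
  also have "\<dots> = \<kappa>" using ea eb assms(1) by (auto simp: fun_eq_iff K_def c)
  finally show ?thesis by (simp add: K_def)
qed

lemma cp_inv2:
  assumes "a \<noteq> b" "good \<sigma> \<rho>" shows "cp a b \<sigma> \<rho> (cpi a b \<sigma> \<rho> \<kappa>) = \<kappa>"
proof -
  have s: "stop \<sigma>" and r: "\<And>w. stop (\<rho> w)" using assms(2) by (auto simp: good_def)
  define z where "z = \<kappa> a"
  define k where "k = \<sigma> z"
  define p where "p = stake k z"
  define z' where "z' = sdrop k z"
  define l where "l = \<rho> p z'"
  define q where "q = stake l z'"
  define K where "K = cpi a b \<sigma> \<rho> \<kappa>"
  have Ka: "K a = cat p (sdrop l z')" and Kb: "K b = cat q (\<kappa> b)" using assms(1)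
    by (simp_all add: K_def cpi_def Let_def z_def k_def p_def z'_def l_def q_def)
  have lp: "length p = k" by (simp add: p_def)
  have lq: "length q = l" by (simp add: q_def)
  have sK: "\<sigma> (K a) = k" unfolding Ka using stop_cat'[OF s, of z p] lp by (simp add: p_def k_def)
  have stK: "stake k (K a) = p" unfolding Ka using lp by simp
  have rK: "\<rho> p (K b) = l" unfolding Kb q_def l_def by (rule stop_cat[OF r])
  have sq: "stake l (K b) = q" unfolding Kb using lq by simp
  have sdK: "sdrop k (K a) = sdrop l z'" unfolding Ka using lp by simp
  have sdb: "sdrop l (K b) = \<kappa> b" unfolding Kb using lq by simp
  have ea: "cat (p @ q) (sdrop l z') = \<kappa> a"
    by (simp add: cat_append q_def z'_def p_def z_def del: sdrop_sdrop)
  have "cp a b \<sigma> \<rho> K = K(a := cat (p @ q) (sdrop l z'), b := \<kappa> b)"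
    by (simp add: cp_def Let_def sK stK rK sq sdK sdb del: sdrop_sdrop)
  also have "\<dots> = \<kappa>" using ea assms(1) by (auto simp: fun_eq_iff K_def cpi_def Let_def)
  finally show ?thesis by (simp add: K_def)
qed

lemma cp_bij: "a \<noteq> b \<Longrightarrow> good \<sigma> \<rho> \<Longrightarrow> bij (cp a b \<sigma> \<rho>)"
  by (rule bij_betw_byWitness[of UNIV "cpi a b \<sigma> \<rho>"]) (auto simp: cp_inv1 cp_inv2)

lemma cp_grid:
  assumes ab: "a \<noteq> b" and g: "good \<sigma> \<rho>" shows "grid_canon UNIV (cp a b \<sigma> \<rho>)"
proof -
  have s: "stop \<sigma>" and r: "\<And>w. stop (\<rho> w)" using g by (auto simp: good_def)
  obtain B where B: "\<And>z y. \<sigma> z + \<rho> (stake (\<sigma> z) z) y \<le> B" using g by (auto simp: good_def)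
  have "\<exists>\<beta>. brick_data UNIV \<beta> \<and> canon_on UNIV (cp a b \<sigma> \<rho>) (grid {a,b} B \<kappa>) \<beta>" for \<kappa>
  proof -
    define x where "x = \<kappa> a"
    define k where "k = \<sigma> x"
    define p where "p = stake k x"
    define y where "y = \<kappa> b"
    define l where "l = \<rho> p y"
    define q where "q = stake l y"
    have kl: "k + l \<le> B" using B[of x y] by (simp add: k_def l_def p_def)
    define \<beta> where "\<beta> = (\<lambda>s. if s = a then p @ q @ drop k (stake B x) else if s = b then drop l (stake B y) else [])"
    have "brick_data UNIV \<beta>"
      unfolding brick_data_def by (auto intro: finite_subset[of _ "{a,b}"] simp: \<beta>_def)
    moreover have "canon_on UNIV (cp a b \<sigma> \<rho>) (grid {a,b} B \<kappa>) \<beta>"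
      unfolding canon_on_def
    proof
      fix \<kappa>' assume k': "\<kappa>' \<in> brick UNIV (grid {a,b} B \<kappa>)"
      have sa: "stake B (\<kappa>' a) = stake B x" and sb: "stake B (\<kappa>' b) = stake B y"
        using k' by (auto simp: brick_iff grid_def x_def y_def dest: spec[of _ a] spec[of _ b])
      have sk: "stake k (\<kappa>' a) = p" using sa kl by (metis le_add1 order_trans stake_eq_prefix p_def)
      have k1: "\<sigma> (\<kappa>' a) = k" using stopD[OF s, of x "\<kappa>' a"] sk by (simp add: k_def p_def)
      have sl: "stake l (\<kappa>' b) = q" using sb kl by (metis le_add2 order_trans stake_eq_prefix q_def)
      have l1: "\<rho> p (\<kappa>' b) = l" using stopD[OF r, of p y "\<kappa>' b"] sl by (simp add: l_def q_def)
      have da: "sdrop k (\<kappa>' a) = cat (drop k (stake B x)) (sdrop B (\<kappa>' a))"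
        using sdrop_split[of k B "\<kappa>' a"] kl sa by simp
      have db: "sdrop l (\<kappa>' b) = cat (drop l (stake B y)) (sdrop B (\<kappa>' b))"
        using sdrop_split[of l B "\<kappa>' b"] kl sb by simp
      have ga: "length (grid {a,b} B \<kappa> a) = B" "length (grid {a,b} B \<kappa> b) = B" by (simp_all add: grid_def)
      show "cp a b \<sigma> \<rho> \<kappa>' = Phi \<beta> (Phi_inv (grid {a,b} B \<kappa>) \<kappa>')"
      proof
        fix s
        show "cp a b \<sigma> \<rho> \<kappa>' s = Phi \<beta> (Phi_inv (grid {a,b} B \<kappa>) \<kappa>') s"
        proof (cases "s = a")
          case True
          thus ?thesis using ab k1 sk l1 sl da ga
            by (simp add: cp_def Let_def Phi_alt Phi_inv_alt \<beta>_def cat_append)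
        next
          case False
          show ?thesis
          proof (cases "s = b")
            case True
            thus ?thesis using ab k1 sk l1 sl db ga
              by (simp add: cp_def Let_def Phi_alt Phi_inv_alt \<beta>_def)
          next
            case False
            thus ?thesis using \<open>s \<noteq> a\<close>
              by (simp add: cp_def Let_def Phi_alt Phi_inv_alt \<beta>_def grid_def)
          qed
        qed
      qed
    qed
    ultimately show ?thesis by blast
  qed
  hence "finite {a,b} \<and> {a,b} \<subseteq> (UNIV::'a set) \<and> (\<forall>\<kappa> \<in> Cpow UNIV. \<exists>\<beta>. brick_data UNIV \<beta> \<and> canon_on UNIV (cp a b \<sigma> \<rho>) (grid {a,b} B \<kappa>) \<beta>)"
    by simp
  thus ?thesis unfolding grid_canon_def by blast
qed

lemma cp_BT_in:
  assumes ab: "a \<noteq> b" and g: "good \<sigma> \<rho>" shows "cp a b \<sigma> \<rho> \<in> BT_in {a,b}"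
proof (rule SV_local_BT_in)
  show "cp a b \<sigma> \<rho> \<in> SV" by (rule grid_SV[OF cp_bij[OF ab g] cp_grid[OF ab g]])
  show "cp a b \<sigma> \<rho> \<kappa> s = \<kappa> s" if "s \<notin> {a,b}" for \<kappa> s
    using that by (simp add: cp_def Let_def)
  show "cp a b \<sigma> \<rho> \<kappa> s = cp a b \<sigma> \<rho> \<kappa>' s" if "\<forall>t\<in>{a,b}. \<kappa> t = \<kappa>' t" "s \<in> {a,b}" for \<kappa> \<kappa>' s
    using that by (auto simp: cp_def Let_def)
qed


definition sig2 :: "(cantor \<Rightarrow> nat) \<Rightarrow> (bool list \<Rightarrow> cantor \<Rightarrow> nat) \<Rightarrow> cantor \<Rightarrow> nat" where
  "sig2 \<sigma> \<rho> z = \<sigma> z + \<rho> (stake (\<sigma> z) z) (sdrop (\<sigma> z) z)"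

lemma stop_const: "stop (\<lambda>_. c)" by (simp add: stop_def)

lemma stake_sdrop_eq: "stake (k + m) y = stake (k + m) x \<Longrightarrow> stake m (sdrop k y) = stake m (sdrop k x)"
  by (simp add: stake_add)

lemma good_move: "good \<sigma> \<rho> \<Longrightarrow> good (\<lambda>_. 0) (\<lambda>_. \<sigma>)"
  unfolding good_def by (auto simp: stop_const) (meson add_leD1)

lemma stop_sig2: assumes "good \<sigma> \<rho>" shows "stop (sig2 \<sigma> \<rho>)"
  unfolding stop_def
proof (intro allI impI)
  fix x y assume a: "stake (sig2 \<sigma> \<rho> x) y = stake (sig2 \<sigma> \<rho> x) x"
  have s: "stop \<sigma>" and r: "\<And>w. stop (\<rho> w)" using assms by (auto simp: good_def)
  define k where "k = \<sigma> x"
  define m where "m = \<rho> (stake k x) (sdrop k x)"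
  have a': "stake (k + m) y = stake (k + m) x" using a by (simp add: sig2_def k_def m_def)
  have "stake k y = stake k x" using a' by (metis le_add1 stake_eq_prefix)
  hence sy: "\<sigma> y = k" using stopD[OF s, of x y] by (simp add: k_def)
  hence py: "stake (\<sigma> y) y = stake k x" using \<open>stake k y = stake k x\<close> by simp
  have "stake m (sdrop k y) = stake m (sdrop k x)" by (rule stake_sdrop_eq[OF a'])
  hence "\<rho> (stake k x) (sdrop k y) = m" using stopD[OF r, of "stake k x" "sdrop k x" "sdrop k y"] by (simp add: m_def)
  thus "sig2 \<sigma> \<rho> y = sig2 \<sigma> \<rho> x" using sy py by (simp add: sig2_def k_def m_def)
qed

lemma good_move2: assumes g: "good \<sigma> \<rho>" shows "good (\<lambda>_. 0) (\<lambda>_. sig2 \<sigma> \<rho>)"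
proof -
  obtain B where B: "\<And>z y. \<sigma> z + \<rho> (stake (\<sigma> z) z) y \<le> B" using g by (auto simp: good_def)
  show ?thesis unfolding good_def using stop_sig2[OF g] B
    by (auto simp: stop_const sig2_def intro!: exI[of _ B])
qed

lemma cp_path:
  fixes r v u :: 's
  assumes d: "r \<noteq> v" "v \<noteq> u" "r \<noteq> u" and g: "good \<sigma> \<rho>"
  shows "cp r u \<sigma> \<rho> = cp r v (\<lambda>_. 0) (\<lambda>_. sig2 \<sigma> \<rho>) \<circ> cp v u \<sigma> \<rho> \<circ> cp v r (\<lambda>_. 0) (\<lambda>_. \<sigma>)"
proof
  fix \<kappa> :: "'s \<Rightarrow> cantor"
  have s: "stop \<sigma>" and rr: "\<And>w. stop (\<rho> w)" using g by (auto simp: good_def)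
  define x where "x = \<kappa> r"
  define y where "y = \<kappa> u"
  define w where "w = \<kappa> v"
  define k where "k = \<sigma> x"
  define p where "p = stake k x"
  define l where "l = \<rho> p y"
  define q where "q = stake l y"
  have lp: "length p = k" by (simp add: p_def)
  have lq: "length q = l" by (simp add: q_def)
  define A where "A = \<kappa>(v := cat p w, r := sdrop k x)"
  have 1: "cp v r (\<lambda>_. 0) (\<lambda>_. \<sigma>) \<kappa> = A"
    by (simp add: cp_def Let_def A_def x_def w_def k_def p_def)
  have sA: "\<sigma> (A v) = k" using d stop_cat'[OF s, of x p w] lp by (simp add: A_def p_def k_def)
  have stA: "stake k (A v) = p" using d lp by (simp add: A_def)
  have Au: "A u = y" using d by (simp add: A_def y_def)
  define B where "B = A(v := cat (p @ q) w, u := sdrop l y)"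
  have 2: "cp v u \<sigma> \<rho> A = B"
    using lp d by (simp add: cp_def Let_def B_def sA stA Au l_def[symmetric] q_def[symmetric] cat_append) (simp add: A_def)
  have sB: "sig2 \<sigma> \<rho> (B v) = k + l"
  proof -
    have Bv: "B v = cat (p @ q) w" using d by (simp add: B_def)
    have a1: "\<sigma> (B v) = k" unfolding Bv cat_append using stop_cat'[OF s, of x p "cat q w"] lp by (simp add: p_def k_def)
    have a2: "stake k (B v) = p" unfolding Bv cat_append using lp by simp
    have a3: "sdrop k (B v) = cat q w" unfolding Bv cat_append using lp by simp
    have a4: "\<rho> p (cat q w) = l" unfolding q_def l_def by (rule stop_cat[OF rr])
    show ?thesis by (simp add: sig2_def a1 a2 a3 a4)
  qed
  have Bv: "B v = cat (p @ q) w" using d by (simp add: B_def)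
  have Br: "B r = sdrop k x" using d by (simp add: B_def A_def)
  have 3: "cp r v (\<lambda>_. 0) (\<lambda>_. sig2 \<sigma> \<rho>) B = B(r := cat (p @ q) (sdrop k x), v := w)"
  proof -
    have e1: "stake (k + l) (B v) = p @ q" unfolding Bv using lp lq by (metis length_append stake_cat_len)
    have e2: "sdrop (k + l) (B v) = w" unfolding Bv using lp lq by (metis length_append sdrop_cat_len)
    show ?thesis by (simp add: cp_def Let_def sB e1 e2 Br del: sdrop_sdrop)
  qed
  have 4: "cp r u \<sigma> \<rho> \<kappa> = \<kappa>(r := cat (p @ q) (sdrop k x), u := sdrop l y)"
    by (simp add: cp_def Let_def x_def[symmetric] y_def[symmetric] k_def[symmetric] p_def[symmetric] l_def[symmetric] q_def[symmetric])
  show "cp r u \<sigma> \<rho> \<kappa> = (cp r v (\<lambda>_. 0) (\<lambda>_. sig2 \<sigma> \<rho>) \<circ> cp v u \<sigma> \<rho> \<circ> cp v r (\<lambda>_. 0) (\<lambda>_. \<sigma>)) \<kappa>"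
    using d by (simp add: 1 2 3 4) (auto simp: fun_eq_iff B_def A_def w_def)
qed


abbreviation GG :: "'s set set \<Rightarrow> (('s \<Rightarrow> cantor) \<Rightarrow> ('s \<Rightarrow> cantor)) set" where
  "GG E \<equiv> gen_group (\<Union>e \<in> E. BT_in e)"

lemma cp_edge: "{x, y} \<in> E \<Longrightarrow> x \<noteq> y \<Longrightarrow> good \<sigma> \<rho> \<Longrightarrow> cp x y \<sigma> \<rho> \<in> GG E"
  by (rule gen_base, rule UN_I[of "{x,y}"], assumption, rule cp_BT_in)

lemma edge_neq: "simple_graph_edges E \<Longrightarrow> {x, y} \<in> E \<Longrightarrow> x \<noteq> y"
  unfolding simple_graph_edges_def by fastforce

lemma cp_G:
  assumes E: "simple_graph_edges E" and C: "connected_graph E"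
    and ab: "a \<noteq> b" and g: "good \<sigma> \<rho>"
  shows "cp a b \<sigma> \<rho> \<in> GG E"
proof -
  have R: "(a, b) \<in> {(x, y). {x, y} \<in> E}\<^sup>*" using C by (simp add: connected_graph_def)
  have "\<forall>\<sigma> \<rho>. a \<noteq> b \<longrightarrow> good \<sigma> \<rho> \<longrightarrow> cp a b \<sigma> \<rho> \<in> GG E \<and> cp b a \<sigma> \<rho> \<in> GG E"
    using R
  proof (induction b rule: rtrancl_induct)
    case base thus ?case by simp
  next
    case (step b c)
    have bc: "{b, c} \<in> E" using step.hyps(2) by simp
    have bnc: "b \<noteq> c" using edge_neq[OF E bc] .
    have cb: "{c, b} \<in> E" using bc by (simp add: insert_commute)
    show ?case
    proof (intro allI impI)
      fix \<sigma> \<rho> assume ac: "a \<noteq> c" and g: "good \<sigma> \<rho>"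
      show "cp a c \<sigma> \<rho> \<in> GG E \<and> cp c a \<sigma> \<rho> \<in> GG E"
      proof (cases "a = b")
        case True
        thus ?thesis using cp_edge[OF bc bnc g] cp_edge[OF cb bnc[symmetric] g] by simp
      next
        case False
        have IH: "\<And>\<sigma> \<rho>. good \<sigma> \<rho> \<Longrightarrow> cp a b \<sigma> \<rho> \<in> GG E \<and> cp b a \<sigma> \<rho> \<in> GG E"
          using step.IH False by blast
        have g1: "good (\<lambda>_. 0) (\<lambda>_. \<sigma>)" by (rule good_move[OF g])
        have g2: "good (\<lambda>_. 0) (\<lambda>_. sig2 \<sigma> \<rho>)" by (rule good_move2[OF g])
        have "cp a c \<sigma> \<rho> = cp a b (\<lambda>_. 0) (\<lambda>_. sig2 \<sigma> \<rho>) \<circ> cp b c \<sigma> \<rho> \<circ> cp b a (\<lambda>_. 0) (\<lambda>_. \<sigma>)"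
          by (rule cp_path[OF False bnc ac g])
        moreover have "cp a b (\<lambda>_. 0) (\<lambda>_. sig2 \<sigma> \<rho>) \<circ> cp b c \<sigma> \<rho> \<circ> cp b a (\<lambda>_. 0) (\<lambda>_. \<sigma>) \<in> GG E"
          using IH[OF g2] IH[OF g1] cp_edge[OF bc bnc g] by (blast intro: gen_comp)
        moreover have "cp c a \<sigma> \<rho> = cp c b (\<lambda>_. 0) (\<lambda>_. sig2 \<sigma> \<rho>) \<circ> cp b a \<sigma> \<rho> \<circ> cp b c (\<lambda>_. 0) (\<lambda>_. \<sigma>)"
          by (rule cp_path) (use False bnc ac g in auto)
        moreover have "cp c b (\<lambda>_. 0) (\<lambda>_. sig2 \<sigma> \<rho>) \<circ> cp b a \<sigma> \<rho> \<circ> cp b c (\<lambda>_. 0) (\<lambda>_. \<sigma>) \<in> GG E"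
          using IH[OF g] cp_edge[OF cb bnc[symmetric] g2] cp_edge[OF bc bnc g1] by (blast intro: gen_comp)
        ultimately show ?thesis by simp
      qed
    qed
  qed
  thus ?thesis using ab g by blast
qed

lemma GG_bij: "f \<in> gen_group A \<Longrightarrow> (\<forall>a\<in>A. bij a) \<Longrightarrow> bij f"
proof (induction rule: gen_group.induct)
  case gen_id thus ?case using bij_id by blast
next
  case (gen_base a) thus ?case by blast
next
  case (gen_inv a) thus ?case by (simp add: bij_imp_bij_inv)
next
  case (gen_comp x y) thus ?case using bij_comp by blast
qed

lemma GG_inv: assumes "f \<in> gen_group A" "\<forall>a\<in>A. bij a" shows "inv f \<in> gen_group A"
  using assms
proof (induction rule: gen_group.induct)
  case gen_id thus ?case by (metis inv_id gen_group.gen_id)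
next
  case (gen_base a) thus ?case by (simp add: gen_group.gen_inv)
next
  case (gen_inv a) thus ?case by (simp add: inv_inv_eq gen_group.gen_base)
next
  case (gen_comp x y)
  have "bij x" "bij y" using GG_bij gen_comp.hyps gen_comp.prems by blast+
  hence "inv (x \<circ> y) = inv y \<circ> inv x" by (rule o_inv_distrib)
  thus ?case using gen_comp gen_group.gen_comp[of "inv y" A "inv x"] by argo
qed

lemma GG_SV: "f \<in> GG E \<Longrightarrow> f \<in> SV"
proof (induction rule: gen_group.induct)
  case gen_id
  have "bij (id :: ('a \<Rightarrow> cantor) \<Rightarrow> _)" by simp
  moreover have "grid_canon UNIV (id :: ('a \<Rightarrow> cantor) \<Rightarrow> _)"
  proof -
    have "\<forall>\<kappa>\<in>Cpow UNIV. \<exists>\<beta>. brick_data UNIV \<beta> \<and> canon_on UNIV (id :: ('a \<Rightarrow> cantor) \<Rightarrow> _) (grid {} 0 \<kappa>) \<beta>"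
      by (auto intro!: exI[of _ "\<lambda>_. []"] simp: brick_data_def canon_on_def grid_def Phi_alt Phi_inv_alt fun_eq_iff)
    thus ?thesis unfolding grid_canon_def by blast
  qed
  ultimately show ?case by (rule grid_SV)
next
  case (gen_base a) thus ?case using BT_in_SV by blast
next
  case (gen_inv a) thus ?case using BT_in_SV SV_inv by blast
next
  case (gen_comp x y) thus ?case using SV_comp by blast
qed


fun coll :: "'s \<Rightarrow> nat \<Rightarrow> (bool list \<Rightarrow> nat) \<Rightarrow> ('s \<times> (bool list \<Rightarrow> nat)) list \<Rightarrow> ('s \<Rightarrow> cantor) \<Rightarrow> ('s \<Rightarrow> cantor)" where
  "coll r K A [] = id"
| "coll r K A ((u, lf) # us) = coll r K (\<lambda>P. A P + lf P) us \<circ> cp r u (\<lambda>z. K + A (stake K z)) (\<lambda>w _. lf (take K w))"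

lemma finite_len_lists: "finite {P :: bool list. length P = K}"
proof -
  have "{P :: bool list. length P = K} = {xs. set xs \<subseteq> UNIV \<and> length xs = K}" by auto
  thus ?thesis using finite_lists_length_eq[of "UNIV::bool set" K] by simp
qed

lemma good_coll_step: "good (\<lambda>z. K + A (stake K z)) (\<lambda>w _. lf (take K w))"
proof -
  have s: "stop (\<lambda>z. K + A (stake K z))"
    unfolding stop_def
  proof (intro allI impI)
    fix x y assume "stake (K + A (stake K x)) y = stake (K + A (stake K x)) x"
    hence "stake K y = stake K x" by (metis le_add1 stake_eq_prefix)
    thus "K + A (stake K y) = K + A (stake K x)" by simp
  qed
  define B where "B = K + (\<Sum>P\<in>{P :: bool list. length P = K}. A P + lf P)"
  have "K + A (stake K z) + lf (take K (stake (K + A (stake K z)) z)) \<le> B" for z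
  proof -
    have t: "take K (stake (K + A (stake K z)) z) = stake K z" by (simp add: stake_sdrop_take)
    have "A (stake K z) + lf (stake K z) \<le> (\<Sum>P\<in>{P :: bool list. length P = K}. A P + lf P)"
      by (rule member_le_sum[of "stake K z"]) (auto simp: finite_len_lists)
    thus ?thesis using t by (simp add: B_def)
  qed
  thus ?thesis unfolding good_def using s stop_const by (auto intro!: exI[of _ B])
qed

lemma coll_eq:
  assumes "distinct (map fst us)" "r \<notin> fst ` set us"
  shows "coll r K A us x r = cat (stake (K + A (stake K (x r))) (x r) @ concat (map (\<lambda>(u,lf). stake (lf (stake K (x r))) (x u)) us)) (sdrop (K + A (stake K (x r))) (x r))
    \<and> (\<forall>s. s \<noteq> r \<longrightarrow> coll r K A us x s = (case map_of us s of None \<Rightarrow> x s | Some lf \<Rightarrow> sdrop (lf (stake K (x r))) (x s)))"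
  using assms
proof (induction us arbitrary: A x)
  case Nil thus ?case by simp
next
  case (Cons a us)
  obtain u lf where a: "a = (u, lf)" by fastforce
  have ur: "u \<noteq> r" using Cons.prems a by auto
  have uus: "u \<notin> fst ` set us" using Cons.prems a by auto
  have d: "distinct (map fst us)" "r \<notin> fst ` set us" using Cons.prems by auto
  define P where "P = stake K (x r)"
  define k where "k = K + A P"
  define x1 where "x1 = cp r u (\<lambda>z. K + A (stake K z)) (\<lambda>w _. lf (take K w)) x"
  have tk: "take K (stake (K + A P) (x r)) = P" by (simp add: P_def stake_sdrop_take)
  have x1r: "x1 r = cat (stake k (x r) @ stake (lf P) (x u)) (sdrop k (x r))"
    using ur by (simp add: x1_def cp_def Let_def k_def P_def[symmetric] tk)
  have x1u: "x1 u = sdrop (lf P) (x u)"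
    using ur by (simp add: x1_def cp_def Let_def k_def P_def[symmetric] tk)
  have x1s: "x1 s = x s" if "s \<noteq> r" "s \<noteq> u" for s
    using that by (simp add: x1_def cp_def Let_def)
  have P1: "stake K (x1 r) = P"
    unfolding x1r cat_append by (simp add: k_def P_def stake_sdrop_take)
  have IH: "coll r K (\<lambda>P. A P + lf P) us x1 r = cat (stake (K + (A P + lf P)) (x1 r) @ concat (map (\<lambda>(u,lf). stake (lf P) (x1 u)) us)) (sdrop (K + (A P + lf P)) (x1 r))"
    "\<And>s. s \<noteq> r \<Longrightarrow> coll r K (\<lambda>P. A P + lf P) us x1 s = (case map_of us s of None \<Rightarrow> x1 s | Some lf \<Rightarrow> sdrop (lf P) (x1 s))"
    using Cons.IH[OF d, of "\<lambda>P. A P + lf P" x1] P1 by auto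
  have e1: "stake (K + (A P + lf P)) (x1 r) = stake k (x r) @ stake (lf P) (x u)"
  proof -
    have "K + (A P + lf P) = length (stake k (x r) @ stake (lf P) (x u))" by (simp add: k_def)
    thus ?thesis unfolding x1r by (metis stake_cat_len)
  qed
  have e2: "sdrop (K + (A P + lf P)) (x1 r) = sdrop k (x r)"
  proof -
    have "K + (A P + lf P) = length (stake k (x r) @ stake (lf P) (x u))" by (simp add: k_def)
    thus ?thesis unfolding x1r by (metis sdrop_cat_len)
  qed
  have e3: "map (\<lambda>(u,lf). stake (lf P) (x1 u)) us = map (\<lambda>(u,lf). stake (lf P) (x u)) us"
  proof (rule map_cong[OF refl])
    fix b assume "b \<in> set us"
    moreover obtain u' lf' where "b = (u', lf')" by fastforce
    ultimately have "u' \<noteq> r" "u' \<noteq> u" using d uus by force+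
    thus "(\<lambda>(u,lf). stake (lf P) (x1 u)) b = (\<lambda>(u,lf). stake (lf P) (x u)) b"
      using x1s \<open>b = (u', lf')\<close> by simp
  qed
  have c: "coll r K A (a # us) x = coll r K (\<lambda>P. A P + lf P) us x1" by (simp add: a x1_def)
  show ?case
  proof
    show "coll r K A (a # us) x r = cat (stake (K + A (stake K (x r))) (x r) @ concat (map (\<lambda>(u,lf). stake (lf (stake K (x r))) (x u)) (a # us))) (sdrop (K + A (stake K (x r))) (x r))"
      unfolding c IH(1) e1 e2 e3 by (simp add: a P_def[symmetric] k_def[symmetric])
    show "\<forall>s. s \<noteq> r \<longrightarrow> coll r K A (a # us) x s = (case map_of (a # us) s of None \<Rightarrow> x s | Some lf \<Rightarrow> sdrop (lf (stake K (x r))) (x s))"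
    proof (intro allI impI)
      fix s assume sr: "s \<noteq> r"
      show "coll r K A (a # us) x s = (case map_of (a # us) s of None \<Rightarrow> x s | Some lf \<Rightarrow> sdrop (lf (stake K (x r))) (x s))"
      proof (cases "s = u")
        case True
        have "map_of us u = None" using uus by (simp add: map_of_eq_None_iff)
        thus ?thesis unfolding c IH(2)[OF sr] using True a x1u by (simp add: P_def)
      next
        case False
        thus ?thesis unfolding c IH(2)[OF sr] using a x1s[OF sr False]
          by (cases "map_of us s") (simp_all add: P_def)
      qed
    qed
  qed
qed

lemma coll_G:
  assumes E: "simple_graph_edges E" and C: "connected_graph E"
  shows "r \<notin> fst ` set us \<Longrightarrow> coll r K A us \<in> GG E"
proof (induction us arbitrary: A)
  case Nil show ?case unfolding coll.simps by (rule gen_group.gen_id)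
next
  case (Cons a us)
  obtain u lf where a: "a = (u, lf)" by fastforce
  have "r \<noteq> u" using Cons.prems a by auto
  hence "cp r u (\<lambda>z. K + A (stake K z)) (\<lambda>w _. lf (take K w)) \<in> GG E"
    using cp_G[OF E C _ good_coll_step] by blast
  moreover have "coll r K (\<lambda>P. A P + lf P) us \<in> GG E" using Cons a by auto
  ultimately show ?case unfolding a coll.simps by (rule gen_group.gen_comp[rotated])
qed


fun chunksV :: "nat list \<Rightarrow> 'a list \<Rightarrow> 'a list list" where
  "chunksV [] w = []"
| "chunksV (n # ns) w = take n w # chunksV ns (drop n w)"

lemma chunksV_concat: "map length Q = ns \<Longrightarrow> chunksV ns (concat Q) = Q"
  by (induction Q arbitrary: ns) auto

lemma map_of_pairs: "map_of (map (\<lambda>u. (u, c u)) us) s = (if s \<in> set us then Some (c s) else None)"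
  by (induction us) auto

lemma map_zip_map: "map (\<lambda>(u, b). F u b) (zip us (map g us)) = map (\<lambda>u. F u (g u)) us"
  by (induction us) auto

lemma length_concat_const: "length (concat (map (\<lambda>u. stake L (x u)) us)) = length us * L"
  by (induction us) auto

lemma sum_list_len: "sum_list (map (\<lambda>u. length (f u)) us) = length (concat (map f us))"
  by (induction us) auto

lemma zip_map_self: "zip us (map f us) = map (\<lambda>u. (u, f u)) us"
  by (induction us) auto

lemma coll_pairs:
  assumes "distinct us" "r \<notin> set us"
  shows "coll r K A (map (\<lambda>u. (u, c u)) us) x r = cat (stake (K + A (stake K (x r))) (x r) @ concat (map (\<lambda>u. stake (c u (stake K (x r))) (x u)) us)) (sdrop (K + A (stake K (x r))) (x r))"
    and "s \<noteq> r \<Longrightarrow> coll r K A (map (\<lambda>u. (u, c u)) us) x s = (if s \<in> set us then sdrop (c s (stake K (x r))) (x s) else x s)"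
proof -
  have d: "distinct (map fst (map (\<lambda>u. (u, c u)) us))" "r \<notin> fst ` set (map (\<lambda>u. (u, c u)) us)"
    using assms by (auto simp: o_def)
  note e = coll_eq[OF d, of K A x]
  have m: "map (\<lambda>(u, lf). stake (lf (stake K (x r))) (x u)) (map (\<lambda>u. (u, c u)) us) = map (\<lambda>u. stake (c u (stake K (x r))) (x u)) us"
    by (simp add: o_def)
  show "coll r K A (map (\<lambda>u. (u, c u)) us) x r = cat (stake (K + A (stake K (x r))) (x r) @ concat (map (\<lambda>u. stake (c u (stake K (x r))) (x u)) us)) (sdrop (K + A (stake K (x r))) (x r))"
    using e m by (simp only: map_map)
  show "s \<noteq> r \<Longrightarrow> coll r K A (map (\<lambda>u. (u, c u)) us) x s = (if s \<in> set us then sdrop (c s (stake K (x r))) (x s) else x s)"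
    using e by (simp add: map_of_pairs)
qed


lemma GG_all_bij: "f \<in> GG E \<Longrightarrow> bij f"
  by (rule GG_bij) (auto intro: SV_bij BT_in_SV)

lemma main_SV_G:
  fixes h :: "('s \<Rightarrow> cantor) \<Rightarrow> ('s \<Rightarrow> cantor)" and E :: "'s set set"
  assumes E: "simple_graph_edges E" and C: "connected_graph E" and ex: "\<exists>a b::'s. a \<noteq> b" and hS: "h \<in> SV"
  shows "h \<in> GG E"
proof -
  obtain a b :: 's where ab: "a \<noteq> b" using ex by blast
  have "(a,b) \<in> {(x,y). {x,y} \<in> E}\<^sup>*" using C by (simp add: connected_graph_def)
  then obtain c where ac: "{a,c} \<in> E" using ab by (cases rule: converse_rtranclE) auto
  define r where "r = a"
  define e0 where "e0 = {a,c}"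
  have re0: "r \<in> e0" by (simp add: r_def e0_def)
  have e0E: "e0 \<in> E" using ac by (simp add: e0_def)
  from BT_grid[OF hS] obtain U0 L where fU0: "finite U0"
    and ex0: "\<forall>\<kappa>. \<exists>\<beta>. brick_data UNIV \<beta> \<and> canon_on UNIV h (grid U0 L \<kappa>) \<beta>"
    unfolding grid_canon_def Cpow_UNIV by blast
  define Bf where "Bf = (\<lambda>g. SOME \<beta>. brick_data UNIV \<beta> \<and> canon_on UNIV h g \<beta>)"
  have Bf: "brick_data UNIV (Bf (grid U0 L \<kappa>)) \<and> canon_on UNIV h (grid U0 L \<kappa>) (Bf (grid U0 L \<kappa>))" for \<kappa>
    using someI_ex[OF ex0[rule_format, of \<kappa>]] by (simp add: Bf_def)
  define GS where "GS = grid U0 L ` (UNIV :: ('s \<Rightarrow> cantor) set)"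
  have fGS: "finite GS" using finite_grids[OF fU0] by (simp add: GS_def)
  define Sb where "Sb = (\<Union>g\<in>GS. {s. Bf g s \<noteq> []})"
  have fSb: "finite Sb"
    unfolding Sb_def
  proof (rule finite_UN_I[OF fGS])
    fix g assume "g \<in> GS"
    then obtain \<kappa> where "g = grid U0 L \<kappa>" by (auto simp: GS_def)
    thus "finite {s. Bf g s \<noteq> []}" using Bf[of \<kappa>] by (simp add: brick_data_def)
  qed
  define U1 where "U1 = insert r (U0 \<union> Sb)"
  have fU1: "finite U1" using fU0 fSb by (simp add: U1_def)
  have U01: "U0 \<subseteq> U1" "r \<in> U1" by (auto simp: U1_def)
  obtain us where dus: "distinct us" and sus: "set us = U1 - {r}"
    using finite_distinct_list[of "U1 - {r}"] fU1 by blast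
  have rus: "r \<notin> set us" using sus by simp
  define g0 where "g0 = (\<lambda>G s. if s \<in> U0 then G s else ([]::bool list))"
  define Bt where "Bt = (\<lambda>G s. Bf (g0 G) s @ drop (length (g0 G s)) (G s))"
  have g0g: "g0 (grid U1 L x) = grid U0 L x" for x
    using U01 by (auto simp: g0_def grid_def fun_eq_iff)
  have Hx: "h x = Phi (Bt (grid U1 L x)) (Phi_inv (grid U1 L x) x)" for x
  proof -
    have "canon_on UNIV h (grid U1 L x) (\<lambda>s. Bf (grid U0 L x) s @ drop (length (grid U0 L x s)) (grid U1 L x s))"
      by (rule canon_refine[OF conjunct2[OF Bf] grid_ext[OF le_refl U01(1)]])
    hence "canon_on UNIV h (grid U1 L x) (Bt (grid U1 L x))" by (simp add: Bt_def g0g)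
    moreover have "x \<in> brick UNIV (grid U1 L x)" by (rule grid_self) simp
    ultimately show ?thesis by (simp add: canon_on_def)
  qed
  define M where "M = (\<Sum>g\<in>GS. \<Sum>s\<in>Sb. length (Bf g s)) + L"
  have lenBf: "length (Bf (grid U0 L x) s) \<le> (\<Sum>g\<in>GS. \<Sum>s\<in>Sb. length (Bf g s))" for x s
  proof (cases "s \<in> Sb")
    case True
    have gin: "grid U0 L x \<in> GS" by (simp add: GS_def)
    have "length (Bf (grid U0 L x) s) \<le> (\<Sum>s\<in>Sb. length (Bf (grid U0 L x) s))"
      using fSb True by (intro member_le_sum) auto
    also have "\<dots> \<le> (\<Sum>g\<in>GS. \<Sum>s\<in>Sb. length (Bf g s))"
      using fGS gin by (intro member_le_sum) auto
    finally show ?thesis .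
  next
    case False
    have "grid U0 L x \<in> GS" by (simp add: GS_def)
    hence "Bf (grid U0 L x) s = []" using False by (auto simp: Sb_def)
    thus ?thesis by simp
  qed
  have lenBt: "length (Bt (grid U1 L x) s) \<le> M" for x s
  proof -
    have "length (drop (length (g0 (grid U1 L x) s)) (grid U1 L x s)) \<le> L" by (simp add: grid_def)
    thus ?thesis using lenBf[of x s] by (simp add: Bt_def g0g M_def)
  qed
  have suppBt: "Bt (grid U1 L x) s = []" if "s \<notin> U1" for x s
  proof -
    have "grid U0 L x \<in> GS" by (simp add: GS_def)
    hence "Bf (grid U0 L x) s = []" using that by (auto simp: Sb_def U1_def)
    thus ?thesis using that by (simp add: Bt_def g0g, simp add: grid_def)
  qed
  have hx1: "h x s = cat (Bt (grid U1 L x) s) (sdrop L (x s))" if "s \<in> U1" for x s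
    using that by (simp add: Hx Phi_alt Phi_inv_alt grid_def)
  have hx2: "h x s = x s" if "s \<notin> U1" for x s
    using that suppBt[OF that] by (simp add: Hx Phi_alt Phi_inv_alt grid_def)
  define m where "m = length us"
  define K2 where "K2 = L + m * L"
  define dec where "dec = (\<lambda>(P::bool list) s. if s = r then take L P else (case map_of (zip us (chunksV (map (\<lambda>_. L) us) (drop L P))) s of None \<Rightarrow> [] | Some w \<Rightarrow> w))"
  define Pc where "Pc = (\<lambda>x::'s \<Rightarrow> cantor. stake L (x r) @ concat (map (\<lambda>u. stake L (x u)) us))"
  have lPc: "length (Pc x) = K2" for x by (simp add: Pc_def K2_def m_def length_concat_const)
  have decP: "dec (Pc x) = grid U1 L x" for x
  proof
    fix s
    show "dec (Pc x) s = grid U1 L x s"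
    proof (cases "s = r")
      case True thus ?thesis using U01 by (simp add: dec_def Pc_def grid_def)
    next
      case False
      have dr: "drop L (Pc x) = concat (map (\<lambda>u. stake L (x u)) us)" by (simp add: Pc_def)
      have ch: "chunksV (map (\<lambda>_. L) us) (concat (map (\<lambda>u. stake L (x u)) us)) = map (\<lambda>u. stake L (x u)) us"
        by (rule chunksV_concat) simp
      show ?thesis using False sus
        by (simp add: dec_def dr ch zip_map_self map_of_pairs grid_def)
    qed
  qed
  define lf where "lf = (\<lambda>u P. M - length (Bt (dec P) u))"
  define YA where "YA = coll r L (\<lambda>_. 0) (map (\<lambda>u. (u, \<lambda>_::bool list. L)) us)"
  define YB where "YB = coll r K2 (\<lambda>_. 0) (map (\<lambda>u. (u, lf u)) us)"
  define Y where "Y = YB \<circ> YA"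
  define W where "W = coll r 0 (\<lambda>_. 0) (map (\<lambda>u. (u, \<lambda>_::bool list. M)) us)"
  have YAr: "YA x r = cat (Pc x) (sdrop L (x r))" for x
    using coll_pairs(1)[OF dus rus, of L "\<lambda>_. 0" "\<lambda>u _. L" x] by (simp add: YA_def Pc_def)
  have YAs: "YA x s = (if s \<in> set us then sdrop L (x s) else x s)" if "s \<noteq> r" for x s
    using coll_pairs(2)[OF dus rus that, of L "\<lambda>_. 0" "\<lambda>u _. L" x] by (simp add: YA_def)
  have YBr: "YB z r = cat (stake K2 (z r) @ concat (map (\<lambda>u. stake (lf u (stake K2 (z r))) (z u)) us)) (sdrop K2 (z r))" for z
    using coll_pairs(1)[OF dus rus, of K2 "\<lambda>_. 0" lf z] by (simp add: YB_def)
  have YBs: "YB z s = (if s \<in> set us then sdrop (lf s (stake K2 (z r))) (z s) else z s)" if "s \<noteq> r" for z s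
    using coll_pairs(2)[OF dus rus that, of K2 "\<lambda>_. 0" lf z] by (simp add: YB_def)
  have Wr: "W z r = cat (concat (map (\<lambda>u. stake M (z u)) us)) (z r)" for z
    using coll_pairs(1)[OF dus rus, of 0 "\<lambda>_. 0" "\<lambda>u _. M" z] by (simp add: W_def)
  have Ws: "W z s = (if s \<in> set us then sdrop M (z s) else z s)" if "s \<noteq> r" for z s
    using coll_pairs(2)[OF dus rus that, of 0 "\<lambda>_. 0" "\<lambda>u _. M" z] by (simp add: W_def)
  have sK2: "stake K2 (YA x r) = Pc x" for x using lPc by (metis YAr stake_cat_len)
  have dK2: "sdrop K2 (YA x r) = sdrop L (x r)" for x using lPc by (metis YAr sdrop_cat_len)
  define Q where "Q = (\<lambda>x::'s \<Rightarrow> cantor. map (\<lambda>u. stake (lf u (Pc x)) (sdrop L (x u))) us)"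
  have Yr: "Y x r = cat (Pc x @ concat (Q x)) (sdrop L (x r))" for x
  proof -
    have "map (\<lambda>u. stake (lf u (Pc x)) (YA x u)) us = Q x"
      unfolding Q_def
    proof (intro map_cong refl)
      fix u assume u: "u \<in> set us"
      hence "u \<noteq> r" using rus by auto
      thus "stake (lf u (Pc x)) (YA x u) = stake (lf u (Pc x)) (sdrop L (x u))" using YAs[of u x] u by simp
    qed
    thus ?thesis by (simp add: Y_def YBr sK2 dK2)
  qed
  have Ys: "Y x s = (if s \<in> set us then sdrop (lf s (Pc x)) (sdrop L (x s)) else x s)" if "s \<noteq> r" for x s
    using that by (simp add: Y_def YBs sK2 YAs)
  have YAG: "YA \<in> GG E" unfolding YA_def by (rule coll_G[OF E C]) (use rus in auto)
  have YBG: "YB \<in> GG E" unfolding YB_def by (rule coll_G[OF E C]) (use rus in auto)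
  have WG: "W \<in> GG E" unfolding W_def by (rule coll_G[OF E C]) (use rus in auto)
  have YG: "Y \<in> GG E" unfolding Y_def using YAG YBG by (rule gen_group.gen_comp[rotated])
  have bY: "bij Y" by (rule GG_all_bij[OF YG])
  have bW: "bij W" by (rule GG_all_bij[OF WG])
  define \<Phi> where "\<Phi> = (\<lambda>z. let P = stake K2 z; ls = map (\<lambda>u. lf u P) us; rest = sdrop K2 z; n = sum_list ls
     in cat (concat (map (\<lambda>(u, b). Bt (dec P) u @ b) (zip us (chunksV ls (stake n rest)))) @ Bt (dec P) r) (sdrop n rest))"
  define \<pi> where "\<pi> = (\<lambda>\<kappa>::'s \<Rightarrow> cantor. \<kappa>(r := \<Phi> (\<kappa> r)))"
  have key: "W \<circ> h \<circ> inv Y = \<pi>"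
  proof
    fix \<kappa> :: "'s \<Rightarrow> cantor"
    define x where "x = inv Y \<kappa>"
    have Yx: "Y x = \<kappa>" using bY by (simp add: x_def bij_is_surj surj_f_inv_f)
    define G where "G = grid U1 L x"
    have dG: "dec (Pc x) = G" by (simp add: G_def decP)
    have hu: "h x u = cat (Bt G u) (sdrop L (x u))" if "u \<in> set us" for u
      using that sus hx1 by (auto simp: G_def)
    have lfu: "lf u (Pc x) = M - length (Bt G u)" for u by (simp add: lf_def dG)
    have stM: "stake M (h x u) = Bt G u @ stake (lf u (Pc x)) (sdrop L (x u))" if "u \<in> set us" for u
    proof -
      have "length (Bt G u) \<le> M" using lenBt by (simp add: G_def)
      thus ?thesis by (simp add: hu[OF that] stake_cat lfu)
    qed
    have ks: "\<kappa> s = (if s \<in> set us then sdrop (lf s (Pc x)) (sdrop L (x s)) else x s)" if "s \<noteq> r" for s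
      using Ys[OF that, of x] Yx by simp
    have kr: "\<kappa> r = cat (Pc x @ concat (Q x)) (sdrop L (x r))" using Yr[of x] Yx by simp
    show "(W \<circ> h \<circ> inv Y) \<kappa> = \<pi> \<kappa>"
    proof
      fix s
      show "(W \<circ> h \<circ> inv Y) \<kappa> s = \<pi> \<kappa> s"
      proof (cases "s = r")
        case False
        show ?thesis
        proof (cases "s \<in> set us")
          case True
          have "length (Bt G s) \<le> M" using lenBt by (simp add: G_def)
          hence "sdrop M (h x s) = sdrop (lf s (Pc x)) (sdrop L (x s))"
            using hu[OF True] by (simp add: sdrop_cat_ge lfu del: sdrop_sdrop)
          thus ?thesis using False True ks by (simp add: \<pi>_def Ws x_def[symmetric])
        next
          case nu: False
          hence "s \<notin> U1" using sus False by auto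
          thus ?thesis using False nu ks hx2 by (simp add: \<pi>_def Ws x_def[symmetric])
        qed
      next
        case True
        have lhs: "W (h x) r = cat (concat (map (\<lambda>u. Bt G u @ stake (lf u (Pc x)) (sdrop L (x u))) us) @ Bt G r) (sdrop L (x r))"
        proof -
          have mm: "map (\<lambda>u. stake M (h x u)) us = map (\<lambda>u. Bt G u @ stake (lf u (Pc x)) (sdrop L (x u))) us"
            using stM by (intro map_cong) auto
          have hr: "h x r = cat (Bt G r) (sdrop L (x r))" using hx1 U01 by (simp add: G_def)
          show ?thesis unfolding Wr mm hr cat_append by (rule refl)
        qed
        have P: "stake K2 (\<kappa> r) = Pc x" using lPc kr by (metis cat_append stake_cat_len)
        have R: "sdrop K2 (\<kappa> r) = cat (concat (Q x)) (sdrop L (x r))" using lPc kr by (metis cat_append sdrop_cat_len)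
        have n: "sum_list (map (\<lambda>u. lf u (Pc x)) us) = length (concat (Q x))"
          using sum_list_len[of "\<lambda>u. stake (lf u (Pc x)) (sdrop L (x u))" us] by (simp add: Q_def)
        have ch: "chunksV (map (\<lambda>u. lf u (Pc x)) us) (concat (Q x)) = Q x"
          by (rule chunksV_concat) (simp add: Q_def)
        have "\<Phi> (\<kappa> r) = cat (concat (map (\<lambda>(u, b). Bt G u @ b) (zip us (Q x))) @ Bt G r) (sdrop L (x r))"
          by (simp add: \<Phi>_def Let_def P R n ch dG del: sdrop_sdrop)
        also have "\<dots> = W (h x) r" unfolding lhs by (simp add: Q_def map_zip_map)
        finally show ?thesis using True by (simp add: \<pi>_def x_def)
      qed
    qed
  qed
  have \<pi>SV: "\<pi> \<in> SV"
  proof -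
    have "W \<in> SV" "inv Y \<in> SV" using GG_SV WG YG SV_inv by blast+
    hence "W \<circ> h \<circ> inv Y \<in> SV" using hS SV_comp by blast
    thus ?thesis using key by simp
  qed
  have \<pi>B: "\<pi> \<in> BT_in e0"
  proof (rule SV_local_BT_in[OF \<pi>SV])
    show "\<pi> \<kappa> s = \<kappa> s" if "s \<notin> e0" for \<kappa> s using that re0 by (auto simp: \<pi>_def)
    show "\<pi> \<kappa> s = \<pi> \<kappa>' s" if "\<forall>t\<in>e0. \<kappa> t = \<kappa>' t" "s \<in> e0" for \<kappa> \<kappa>' s
      using that re0 by (auto simp: \<pi>_def)
  qed
  have \<pi>G: "\<pi> \<in> GG E" by (rule gen_base) (use \<pi>B e0E in blast)
  have "h = inv W \<circ> \<pi> \<circ> Y"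
  proof -
    have "inv W \<circ> \<pi> \<circ> Y = inv W \<circ> (W \<circ> h \<circ> inv Y) \<circ> Y" by (simp add: key)
    also have "\<dots> = (inv W \<circ> W) \<circ> h \<circ> (inv Y \<circ> Y)" by (simp add: o_assoc)
    also have "\<dots> = h" using bW bY by (simp add: bij_is_inj)
    finally show ?thesis by simp
  qed
  moreover have "inv W \<circ> \<pi> \<circ> Y \<in> GG E"
    using GG_inv[OF WG] \<pi>G YG by (auto intro: gen_group.gen_comp BT_in_SV SV_bij)
  ultimately show ?thesis by simp
qed

theorem proposition3p2:
  fixes E :: "'s set set"
  assumes "\<exists>a b :: 's. a \<noteq> b"
    and "simple_graph_edges E"
    and "connected_graph E"
  shows "gen_group (\<Union>e \<in> E. BT_in e) = (SV :: (('s \<Rightarrow> cantor) \<Rightarrow> ('s \<Rightarrow> cantor)) set)"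
proof
  show "gen_group (\<Union>e \<in> E. BT_in e) \<subseteq> (SV :: (('s \<Rightarrow> cantor) \<Rightarrow> ('s \<Rightarrow> cantor)) set)"
    using GG_SV by blast
  show "(SV :: (('s \<Rightarrow> cantor) \<Rightarrow> ('s \<Rightarrow> cantor)) set) \<subseteq> gen_group (\<Union>e \<in> E. BT_in e)"
    using main_SV_G[OF assms(2,3,1)] by blast
qed

end
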